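(* Let $(\mathcal{F}_n:n\geq0)$ be the dyadic filtration on $[0,1]$, let $(m_k:k\geq1)$ be an increasing sequence of nonnegative integers, and let $s\geq0$ be an integer. For each $k$, let $T_k$ be a sublinear operator acting on $\mathcal{F}_{m_k}$-measurable functions, with values in functions on $[0,1]$. Assume the following two conditions. (i) $\|T_k f\|_{L^1[0,1]}\leq C_1\|f\|_{L^1[0,1]}$ for every $\mathcal{F}_{m_k}$-measurable $f$ and every $k$. (ii) $\|T_kf\|_{L^2}\leq C_2|I|^{1/2}\|f\|_{L^2}$ whenever the following all hold: $f$ is $\mathcal{F}_{m_k}$-measurable; $f$ is supported on a dyadic interval $I$ of length $2^{-m}$; and there exists $j$ with $m\leq m_j$ and $k\geq j+s$. Then for every sequence $(f_k:k\geq1)$ with each $f_k$ being $\mathcal{F}_{m_k}$-measurable, $$\big\|(T_kf_k:k\geq1)\big\|_{\mathrm{ind}}\leq c\,\big(C_1s^{1/2}+C_2\big)\,\Big\|\Big(\sum_{k\geq1}|f_k|^2\Big)^{1/2}\Big\|_{L^1[0,1]},$$ where $c$ is an absolute constant.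
   Context: The dyadic filtration: $\mathcal{F}_n$ is the $\sigma$-algebra on $[0,1]$ generated by the intervals $[j2^{-n},(j+1)2^{-n})$, and $[0,1]$ carries Lebesgue measure $\mu$. For a sequence $(g_k:k\geq1)$ of functions in $L^1(\Omega,\mu)$, define $$\|(g_k)\|_{\mathrm{ind}}=\int_{\Omega^\infty}\sqrt{\sum_{k\geq1}|g_k(\omega_k)|^2}\,d\mu^{\otimes\infty}(\omega).$$ Here $\omega=(\omega_1,\omega_2,\dots)$, so each $g_k$ is evaluated at an independent coordinate. An operator $T$ is sublinear if $|T(f+g)|\leq|Tf|+|Tg|$ and $|T(\lambda f)|=|\lambda||Tf|$. *)

theory Defs
  imports "HOL-Probability.Probability"
begin

definition unitI :: "real measure" where
  "unitI = restrict_space lborel {0..1}"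

definition dyadic_int :: "nat \<Rightarrow> nat \<Rightarrow> real set" where
  "dyadic_int n j = {real j / 2 ^ n ..< (real j + 1) / 2 ^ n}"

text \<open>F_n-measurability on [0,1]: the atoms of F_n are the dyadic intervals of
  length 2^-n together with the point 1, so a function is F_n-measurable iff it is
  constant on each dyadic interval of generation n (values off [0,1] are irrelevant).\<close>
definition dyadic_meas :: "nat \<Rightarrow> (real \<Rightarrow> real) \<Rightarrow> bool" where
  "dyadic_meas n f \<longleftrightarrow>
     (\<forall>j < 2 ^ n. \<forall>x \<in> dyadic_int n j. \<forall>y \<in> dyadic_int n j. f x = f y)"

definition esqrt :: "ennreal \<Rightarrow> ennreal" where
  "esqrt x = (if x = \<infinity> then \<infinity> else ennreal (sqrt (enn2real x)))"

definition L1n :: "(real \<Rightarrow> real) \<Rightarrow> ennreal" where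
  "L1n f = (\<integral>\<^sup>+ x. ennreal \<bar>f x\<bar> \<partial>unitI)"

definition L2n :: "(real \<Rightarrow> real) \<Rightarrow> ennreal" where
  "L2n f = esqrt (\<integral>\<^sup>+ x. ennreal ((f x)\<^sup>2) \<partial>unitI)"

definition sublinear_on :: "((real \<Rightarrow> real) \<Rightarrow> bool) \<Rightarrow> ((real \<Rightarrow> real) \<Rightarrow> (real \<Rightarrow> real)) \<Rightarrow> bool" where
  "sublinear_on P T \<longleftrightarrow>
     (\<forall>f g. P f \<longrightarrow> P g \<longrightarrow>
        (AE x in unitI. \<bar>T (\<lambda>y. f y + g y) x\<bar> \<le> \<bar>T f x\<bar> + \<bar>T g x\<bar>)) \<and>
     (\<forall>f c. P f \<longrightarrow> (AE x in unitI. \<bar>T (\<lambda>y. c * f y) x\<bar> = \<bar>c\<bar> * \<bar>T f x\<bar>))"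

text \<open>The norm ||(g_k : k >= 1)||_ind, each g_k evaluated at an independent coordinate
  (coordinate 0 of the product is unused).\<close>
definition ind_norm :: "(nat \<Rightarrow> real \<Rightarrow> real) \<Rightarrow> ennreal" where
  "ind_norm g = (\<integral>\<^sup>+ \<omega>. esqrt (\<Sum>k. ennreal ((g (Suc k) (\<omega> (Suc k)))\<^sup>2))
                    \<partial>(PiM UNIV (\<lambda>_. unitI)))"

definition sqfun_norm :: "(nat \<Rightarrow> real \<Rightarrow> real) \<Rightarrow> ennreal" where
  "sqfun_norm f = (\<integral>\<^sup>+ x. esqrt (\<Sum>k. ennreal ((f (Suc k) x)\<^sup>2)) \<partial>unitI)"

end

theory Submission
  imports Defs
begin



definition S2 :: "(nat \<Rightarrow> 'p \<Rightarrow> real) \<Rightarrow> nat \<Rightarrow> 'p \<Rightarrow> real" where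
  "S2 \<phi> k p = (\<Sum>l<k. (\<phi> l p)\<^sup>2)"

definition good :: "nat \<Rightarrow> (nat \<Rightarrow> 'p \<Rightarrow> real) \<Rightarrow> nat \<Rightarrow> 'p \<Rightarrow> bool" where
  "good s \<phi> i p \<longleftrightarrow> S2 \<phi> (Suc i) p \<le> 5 * S2 \<phi> (Suc i - s) p"

lemma S2_nonneg: "0 \<le> S2 \<phi> k p"
  unfolding S2_def by (intro sum_nonneg) auto

lemma S2_mono: "k \<le> k' \<Longrightarrow> S2 \<phi> k p \<le> S2 \<phi> k' p"
  unfolding S2_def by (intro sum_mono2) auto

lemma key_sqrt:
  fixes X y :: real
  assumes "0 \<le> y" "5 * y < X"
  shows "sqrt (X - y) + 2 * sqrt y \<le> 2 * sqrt X"
proof -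
  define a where "a = sqrt (X - y)"
  define b where "b = sqrt y"
  have a0: "a \<ge> 0" and b0: "b \<ge> 0" using assms by (auto simp: a_def b_def)
  have aa: "a\<^sup>2 = X - y" using assms by (simp add: a_def)
  have bb: "b\<^sup>2 = y" using assms by (simp add: b_def)
  have "2 * b \<le> a"
  proof -
    have "(2*b)\<^sup>2 \<le> a\<^sup>2" using aa bb assms by (simp add: power_mult_distrib)
    thus ?thesis using a0 b0 by (meson abs_le_square_iff abs_of_nonneg zero_le_mult_iff zero_le_numeral power2_le_imp_le)
  qed
  hence "a * (2*b) \<le> a * a" using a0 by (rule mult_left_mono)
  moreover have "(2 * sqrt X)\<^sup>2 = 4 * X" using assms by (simp add: power_mult_distrib)
  moreover have "0 \<le> a * a" using a0 by simp
  moreover have "(a + 2*b)\<^sup>2 \<le> 4 * X"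
  proof -
    have e1: "(a+2*b)\<^sup>2 = a*a + 4*(a*b) + 4*(b*b)" by (simp add: power2_eq_square algebra_simps)
    have e2: "a*(2*b) = 2*(a*b)" by simp
    have e3: "X = b*b + a*a" using aa bb by (simp add: power2_eq_square)
    show ?thesis using e1 e2 e3 \<open>a * (2*b) \<le> a * a\<close> \<open>0 \<le> a * a\<close> by linarith
  qed
  ultimately have "(a + 2*b)\<^sup>2 \<le> (2 * sqrt X)\<^sup>2" by simp
  hence "a + 2*b \<le> 2 * sqrt X"
    by (rule power2_le_imp_le) (use assms in auto)
  thus ?thesis by (simp add: a_def b_def)
qed

lemma sum_abs_le_sqrt_card:
  fixes x :: "nat \<Rightarrow> real"
  shows "(\<Sum>i\<in>A. \<bar>x i\<bar>) \<le> sqrt (card A) * sqrt (\<Sum>i\<in>A. (x i)\<^sup>2)"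
proof -
  have "(\<Sum>i\<in>A. \<bar>x i\<bar> * \<bar>1\<bar>) \<le> L2_set x A * L2_set (\<lambda>_. 1) A"
    by (rule L2_set_mult_ineq)
  thus ?thesis by (simp add: L2_set_def L2_set_constant mult.commute)
qed

lemma bad_sum:
  fixes x :: "nat \<Rightarrow> real"
  defines "Q \<equiv> \<lambda>k. \<Sum>l<k. (x l)\<^sup>2"
  shows "(\<Sum>i<n. if Q (Suc i) \<le> 5 * Q (Suc i - s) then 0 else \<bar>x i\<bar>) \<le> 2 * sqrt s * sqrt (Q n)"
proof (induction n rule: less_induct)
  case (less n)
  have Q0: "Q k \<ge> 0" for k unfolding Q_def by (intro sum_nonneg) auto
  have Qm: "k \<le> k' \<Longrightarrow> Q k \<le> Q k'" for k k' unfolding Q_def by (intro sum_mono2) auto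
  let ?B = "\<lambda>i. \<not> Q (Suc i) \<le> 5 * Q (Suc i - s)"
  let ?t = "\<lambda>i. if Q (Suc i) \<le> 5 * Q (Suc i - s) then 0 else \<bar>x i\<bar>"
  show ?case
  proof (cases "\<exists>i<n. ?B i")
    case False
    hence "(\<Sum>i<n. ?t i) = 0" by (intro sum.neutral) auto
    thus ?thesis using Q0 by simp
  next
    case True
    define k where "k = Max {i. i<n \<and> ?B i}"
    have fin: "finite {i. i<n \<and> ?B i}" by simp
    have kin: "k \<in> {i. i<n \<and> ?B i}" unfolding k_def using True by (intro Max_in fin) auto
    hence kn: "k < n" and Bk: "?B k" by auto
    have kmax: "\<not> ?B i" if "k < i" "i < n" for i
      using Max_ge[OF fin, of i] that unfolding k_def[symmetric] by auto
    have s1: "s \<ge> 1"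
    proof (rule ccontr)
      assume "\<not> s \<ge> 1" hence "s = 0" by simp
      thus False using Bk Q0[of "Suc k"] by simp
    qed
    define t where "t = Suc k - s"
    have tk: "t \<le> k" using s1 by (simp add: t_def)
    have "(\<Sum>i<n. ?t i) = (\<Sum>i<Suc k. ?t i)"
    proof -
      have "(\<Sum>i<n. ?t i) = (\<Sum>i<Suc k. ?t i) + (\<Sum>i\<in>{Suc k..<n}. ?t i)"
        using kn by (metis (no_types, lifting) Suc_leI lessThan_atLeast0 sum.atLeastLessThan_concat zero_le)
      moreover have "(\<Sum>i\<in>{Suc k..<n}. ?t i) = 0"
      proof (intro sum.neutral ballI)
        fix i assume "i \<in> {Suc k..<n}"
        hence "k < i" "i < n" by auto
        thus "?t i = 0" using kmax[of i] by simp
      qed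
      ultimately show ?thesis by simp
    qed
    also have "\<dots> = (\<Sum>i<t. ?t i) + (\<Sum>i\<in>{t..<Suc k}. ?t i)"
      using tk by (metis (no_types, lifting) le_SucI lessThan_atLeast0 sum.atLeastLessThan_concat zero_le)
    also have "(\<Sum>i<t. ?t i) \<le> 2 * sqrt s * sqrt (Q t)"
      using less[of t] tk kn by simp
    also have "(\<Sum>i\<in>{t..<Suc k}. ?t i) \<le> (\<Sum>i\<in>{t..<Suc k}. \<bar>x i\<bar>)"
      by (intro sum_mono) auto
    also have "\<dots> \<le> sqrt (card {t..<Suc k}) * sqrt (\<Sum>i\<in>{t..<Suc k}. (x i)\<^sup>2)"
      by (rule sum_abs_le_sqrt_card)
    also have "\<dots> \<le> sqrt s * sqrt (Q (Suc k) - Q t)"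
    proof (intro mult_mono)
      show "sqrt (real (card {t..<Suc k})) \<le> sqrt (real s)" by (simp add: t_def)
      have "Q (Suc k) = Q t + (\<Sum>i\<in>{t..<Suc k}. (x i)\<^sup>2)"
        unfolding Q_def using tk
        by (metis (no_types, lifting) le_SucI lessThan_atLeast0 sum.atLeastLessThan_concat zero_le)
      thus "sqrt (\<Sum>i\<in>{t..<Suc k}. (x i)\<^sup>2) \<le> sqrt (Q (Suc k) - Q t)" by simp
    qed (auto intro!: sum_nonneg add_nonneg_nonneg)
    finally have "(\<Sum>i<n. ?t i) \<le> sqrt s * (sqrt (Q (Suc k) - Q t) + 2 * sqrt (Q t))"
      by (simp add: algebra_simps)
    also have "\<dots> \<le> sqrt s * (2 * sqrt (Q (Suc k)))"
      using key_sqrt[of "Q t" "Q (Suc k)"] Bk Q0[of t] unfolding t_def by (intro mult_left_mono) auto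
    also have "\<dots> \<le> sqrt s * (2 * sqrt (Q n))"
      using Qm[of "Suc k" n] kn by (intro mult_left_mono) auto
    finally show ?thesis by simp
  qed
qed

definition bc :: "nat \<Rightarrow> nat \<Rightarrow> (nat \<Rightarrow> real) \<Rightarrow> bool" where
  "bc L n g \<longleftrightarrow> (\<forall>j j'. j div 2^(L-n) = j' div 2^(L-n) \<longrightarrow> g j = g j')"

definition ce :: "nat \<Rightarrow> nat \<Rightarrow> (nat \<Rightarrow> real) \<Rightarrow> nat \<Rightarrow> real" where
  "ce L n g j = (\<Sum>r<2^(L-n). g (j div 2^(L-n) * 2^(L-n) + r)) / 2^(L-n)"

lemma bc_ce: "bc L n (ce L n g)"
  unfolding bc_def ce_def by auto

lemma bc_mono:
  assumes "n \<le> n'" "n' \<le> L" "bc L n g"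
  shows "bc L n' g"
  unfolding bc_def
proof (intro allI impI)
  fix j j' :: nat
  assume h: "j div 2^(L-n') = j' div 2^(L-n')"
  have e: "(2::nat)^(L-n) = 2^(L-n') * 2^(n'-n)"
    using assms by (simp add: power_add[symmetric])
  have "j div 2^(L-n) = j' div 2^(L-n)"
    unfolding e div_mult2_eq h ..
  thus "g j = g j'" using assms(3) unfolding bc_def by blast
qed

lemma bc_comp: "bc L n g \<Longrightarrow> bc L n (\<lambda>j. h (g j))"
  unfolding bc_def by metis

lemma bc_add: "bc L n f \<Longrightarrow> bc L n g \<Longrightarrow> bc L n (\<lambda>j. f j + g j)"
  unfolding bc_def by metis

lemma bc_sum: "(\<And>i. i \<in> I \<Longrightarrow> bc L n (f i)) \<Longrightarrow> bc L n (\<lambda>j. \<Sum>i\<in>I. f i j)"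
  unfolding bc_def by (metis (mono_tags, lifting) sum.cong)

lemma bc_const: "bc L n (\<lambda>j. c)"
  unfolding bc_def by simp

lemma sum_blocks:
  fixes h :: "nat \<Rightarrow> real"
  assumes "n \<le> L"
  shows "(\<Sum>j<2^L. h j) = (\<Sum>J<2^n. \<Sum>r<2^(L-n). h (J * 2^(L-n) + r))"
proof -
  have e: "(2::nat)^L = 2^n * 2^(L-n)" using assms by (simp add: power_add[symmetric])
  have "(\<Sum>J<2^n. \<Sum>r<2^(L-n). h (J * 2^(L-n) + r)) = (\<Sum>J<2^n. sum h {J * 2^(L-n)..<J * 2^(L-n) + 2^(L-n)})"
  proof (rule sum.cong[OF refl])
    fix J :: nat
    have "sum h {0 + J * 2^(L-n)..<2^(L-n) + J * 2^(L-n)} = (\<Sum>r=0..<2^(L-n). h (r + J * 2^(L-n)))"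
      by (rule sum.shift_bounds_nat_ivl)
    thus "(\<Sum>r<2^(L-n). h (J * 2^(L-n) + r)) = sum h {J * 2^(L-n)..<J * 2^(L-n) + 2^(L-n)}"
      by (simp add: add.commute atLeast0LessThan)
  qed
  also have "\<dots> = sum h {..<2^n * 2^(L-n)}" by (rule sum.nat_group)
  finally show ?thesis using e by simp
qed

lemma ce_prop:
  assumes "n \<le> L" "bc L n w"
  shows "(\<Sum>j<2^L. w j * ce L n g j) = (\<Sum>j<2^L. w j * g j)"
proof -
  let ?d = "(2::nat)^(L-n)"
  have dpos: "?d > 0" by simp
  have dv: "(J * ?d + r) div ?d = J" if "r < ?d" for J r
    using that by simp
  have "(\<Sum>j<2^L. w j * ce L n g j) = (\<Sum>J<2^n. \<Sum>r<?d. w (J * ?d + r) * ce L n g (J * ?d + r))"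
    by (rule sum_blocks[OF assms(1)])
  also have "\<dots> = (\<Sum>J<2^n. \<Sum>r<?d. w (J * ?d) * ((\<Sum>r'<?d. g (J * ?d + r')) / ?d))"
  proof (intro sum.cong refl)
    fix J r assume "r \<in> {..<?d}"
    hence r: "r < ?d" by simp
    have "w (J * ?d + r) = w (J * ?d)"
      using assms(2) unfolding bc_def using dv[OF r] dv[of 0] by simp
    moreover have "ce L n g (J * ?d + r) = (\<Sum>r'<?d. g (J * ?d + r')) / ?d"
      unfolding ce_def using dv[OF r] by simp
    ultimately show "w (J * ?d + r) * ce L n g (J * ?d + r) = w (J * ?d) * ((\<Sum>r'<?d. g (J * ?d + r')) / ?d)"
      by simp
  qed
  also have "\<dots> = (\<Sum>J<2^n. \<Sum>r<?d. w (J * ?d + r) * g (J * ?d + r))"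
  proof (rule sum.cong[OF refl])
    fix J
    have "(\<Sum>r<?d. w (J * ?d + r) * g (J * ?d + r)) = (\<Sum>r<?d. w (J * ?d) * g (J * ?d + r))"
    proof (intro sum.cong refl)
      fix r assume "r \<in> {..<?d}"
      hence r: "r < ?d" by simp
      show "w (J * ?d + r) * g (J * ?d + r) = w (J * ?d) * g (J * ?d + r)"
        using assms(2) unfolding bc_def using dv[OF r] dv[of 0] by simp
    qed
    also have "\<dots> = w (J * ?d) * (\<Sum>r<?d. g (J * ?d + r))" by (simp add: sum_distrib_left)
    finally show "(\<Sum>r<?d. w (J * ?d) * ((\<Sum>r'<?d. g (J * ?d + r')) / ?d)) = (\<Sum>r<?d. w (J * ?d + r) * g (J * ?d + r))"
      by simp
  qed
  also have "\<dots> = (\<Sum>j<2^L. w j * g j)"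
    by (rule sum_blocks[OF assms(1), symmetric])
  finally show ?thesis .
qed

lemma ce_nonneg: "(\<And>j. 0 \<le> g j) \<Longrightarrow> 0 \<le> ce L n g j"
  unfolding ce_def by (intro divide_nonneg_pos sum_nonneg) auto

lemma tele_term:
  fixes p q :: real
  assumes "0 \<le> p" "p \<le> q"
  shows "sqrt q - sqrt p \<le> (q - p) / sqrt q" and "(q - p) / sqrt q \<le> 2 * (sqrt q - sqrt p)"
proof -
  have "sqrt q - sqrt p \<le> (q - p) / sqrt q \<and> (q - p) / sqrt q \<le> 2 * (sqrt q - sqrt p)"
  proof (cases "q = 0")
    case True thus ?thesis using assms by simp
  next
    case False
    hence sq: "sqrt q > 0" using assms by simp
    have sp: "0 \<le> sqrt p" "sqrt p \<le> sqrt q" using assms by auto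
    have e: "q - p = (sqrt q - sqrt p) * (sqrt q + sqrt p)"
      using assms by (simp add: algebra_simps)
    have "(sqrt q - sqrt p) * sqrt q \<le> (sqrt q - sqrt p) * (sqrt q + sqrt p)"
      using sp by (intro mult_left_mono) auto
    moreover have "(sqrt q - sqrt p) * (sqrt q + sqrt p) \<le> (sqrt q - sqrt p) * (2 * sqrt q)"
      using sp by (intro mult_left_mono) auto
    ultimately show ?thesis using sq unfolding e
      by (simp add: pos_le_divide_eq pos_divide_le_eq mult_ac)
  qed
  thus "sqrt q - sqrt p \<le> (q - p) / sqrt q" "(q - p) / sqrt q \<le> 2 * (sqrt q - sqrt p)" by auto
qed

lemma tele1:
  fixes y :: "nat \<Rightarrow> real"
  assumes "\<And>k. 0 \<le> y k" "\<And>k. y k \<le> y (Suc k)"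
  shows "sqrt (y n) - sqrt (y 0) \<le> (\<Sum>i<n. (y (Suc i) - y i) / sqrt (y (Suc i)))"
proof (induction n)
  case 0 thus ?case by simp
next
  case (Suc n)
  thus ?case using tele_term(1)[OF assms(1)[of n] assms(2)[of n]] by simp
qed

lemma tele2:
  fixes y :: "nat \<Rightarrow> real"
  assumes "\<And>k. 0 \<le> y k" "\<And>k. y k \<le> y (Suc k)"
  shows "(\<Sum>i<n. (y (Suc i) - y i) / sqrt (y (Suc i))) \<le> 2 * sqrt (y n) - 2 * sqrt (y 0)"
proof (induction n)
  case 0 thus ?case by simp
next
  case (Suc n)
  thus ?case using tele_term(2)[OF assms(1)[of n] assms(2)[of n]] by simp
qed

lemma L2_set_sum_le:
  fixes h :: "'a \<Rightarrow> 'b \<Rightarrow> real"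
  shows "L2_set (\<lambda>i. \<Sum>j\<in>J. h i j) I \<le> (\<Sum>j\<in>J. L2_set (\<lambda>i. h i j) I)"
proof (induction J rule: infinite_finite_induct)
  case (infinite A) thus ?case by (simp add: L2_set_def)
next
  case empty thus ?case by (simp add: L2_set_def)
next
  case (insert x F)
  have "L2_set (\<lambda>i. \<Sum>j\<in>insert x F. h i j) I = L2_set (\<lambda>i. h i x + (\<Sum>j\<in>F. h i j)) I"
    using insert by simp
  also have "\<dots> \<le> L2_set (\<lambda>i. h i x) I + L2_set (\<lambda>i. \<Sum>j\<in>F. h i j) I"
    by (rule L2_set_triangle_ineq)
  also have "\<dots> \<le> L2_set (\<lambda>i. h i x) I + (\<Sum>j\<in>F. L2_set (\<lambda>i. h i j) I)"
    using insert by simp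
  finally show ?case using insert by simp
qed

lemma div_sqrt_anti:
  fixes c p q :: real
  assumes "0 \<le> c" "0 < p" "p \<le> q"
  shows "c / sqrt q \<le> c / sqrt p"
  using assms by (intro divide_left_mono) auto

lemma garsia:
  fixes a Q :: "nat \<Rightarrow> nat \<Rightarrow> real" and n :: "nat \<Rightarrow> nat" and Z :: "nat \<Rightarrow> real"
  assumes nL: "\<And>i. i < N \<Longrightarrow> n i \<le> L"
    and nmono: "\<And>l i. l \<le> i \<Longrightarrow> i < N \<Longrightarrow> n l \<le> n i"
    and a0: "\<And>i j. 0 \<le> a i j"
    and Q0: "\<And>k j. 0 \<le> Q k j" and Qz: "\<And>j. Q 0 j = 0"
    and Qmono: "\<And>k j. Q k j \<le> Q (Suc k) j"
    and Qbc: "\<And>i. i < N \<Longrightarrow> bc L (n i) (Q (Suc i))"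
    and AQ: "\<And>k j. k \<le> N \<Longrightarrow> (\<Sum>l<k. a l j) \<le> 5 * Q k j"
    and QZ: "\<And>j. Q N j \<le> Z j" and AZ: "\<And>j. (\<Sum>l<N. a l j) \<le> Z j"
  shows "(\<Sum>j<2^L. sqrt (\<Sum>i<N. ce L (n i) (a i) j)) \<le> (2 * sqrt 5 + 2) * (\<Sum>j<2^L. sqrt (Z j))"
proof -
  define b where "b i = ce L (n i) (a i)" for i
  have b0: "0 \<le> b i j" for i j unfolding b_def by (intro ce_nonneg a0)
  define A where "A k j = (\<Sum>l<k. a l j)" for k j
  have A0: "0 \<le> A k j" for k j unfolding A_def by (intro sum_nonneg a0)
  have Amono: "A k j \<le> A (Suc k) j" for k j unfolding A_def using a0 by simp
  define z where "z k j = (\<Sum>l<k. b l j) + Q k j" for k j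
  have z0: "0 \<le> z k j" for k j unfolding z_def using b0 Q0 by (intro add_nonneg_nonneg sum_nonneg) auto
  have zmono: "z k j \<le> z (Suc k) j" for k j unfolding z_def using b0[of k j] Qmono[of k j] by simp
  have zQ: "Q k j \<le> z k j" for k j unfolding z_def using b0 by (simp add: sum_nonneg)
  define w where "w i j = 1 / sqrt (z (Suc i) j)" for i j
  have wbc: "bc L (n i) (w i)" if i: "i < N" for i
  proof -
    have "bc L (n i) (b l)" if "l \<in> {..<Suc i}" for l
    proof -
      have "l \<le> i" using that by simp
      thus ?thesis unfolding b_def using bc_mono[OF nmono[OF _ i] nL[OF i] bc_ce] by blast
    qed
    hence "bc L (n i) (\<lambda>j. \<Sum>l<Suc i. b l j)" by (rule bc_sum)
    hence "bc L (n i) (z (Suc i))" unfolding z_def[abs_def] using bc_add Qbc[OF i] by blast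
    thus ?thesis unfolding w_def[abs_def] by (rule bc_comp)
  qed
  have pw: "sqrt (\<Sum>i<N. b i j) \<le> (\<Sum>i<N. b i j * w i j) + 2 * sqrt (Z j)" for j
  proof -
    have "sqrt (\<Sum>i<N. b i j) \<le> sqrt (z N j)" unfolding z_def using Q0 by simp
    also have "\<dots> = sqrt (z N j) - sqrt (z 0 j)" by (simp add: z_def Qz)
    also have "\<dots> \<le> (\<Sum>i<N. (z (Suc i) j - z i j) / sqrt (z (Suc i) j))"
      by (rule tele1[of "\<lambda>k. z k j"]) (auto intro: z0 zmono)
    also have "\<dots> = (\<Sum>i<N. b i j * w i j + (Q (Suc i) j - Q i j) / sqrt (z (Suc i) j))"
      by (intro sum.cong refl) (simp add: z_def w_def add_divide_distrib diff_divide_distrib)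
    also have "\<dots> \<le> (\<Sum>i<N. b i j * w i j + (Q (Suc i) j - Q i j) / sqrt (Q (Suc i) j))"
    proof (intro sum_mono add_left_mono)
      fix i
      show "(Q (Suc i) j - Q i j) / sqrt (z (Suc i) j) \<le> (Q (Suc i) j - Q i j) / sqrt (Q (Suc i) j)"
      proof (cases "Q (Suc i) j = 0")
        case True thus ?thesis using Q0[of i j] Qmono[of i j] by simp
      next
        case False thus ?thesis using Q0[of "Suc i" j] Qmono[of i j] zQ[of "Suc i" j]
          by (intro div_sqrt_anti) auto
      qed
    qed
    also have "\<dots> = (\<Sum>i<N. b i j * w i j) + (\<Sum>i<N. (Q (Suc i) j - Q i j) / sqrt (Q (Suc i) j))"
      by (simp add: sum.distrib)
    also have "(\<Sum>i<N. (Q (Suc i) j - Q i j) / sqrt (Q (Suc i) j)) \<le> 2 * sqrt (Q N j) - 2 * sqrt (Q 0 j)"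
      by (rule tele2[of "\<lambda>k. Q k j"]) (auto intro: Q0 Qmono)
    also have "\<dots> \<le> 2 * sqrt (Z j)" using QZ[of j] Qz[of j] by simp
    finally show ?thesis by simp
  qed
  have pw2: "(\<Sum>i<N. a i j * w i j) \<le> 2 * sqrt 5 * sqrt (Z j)" for j
  proof -
    have "a i j * w i j \<le> sqrt 5 * ((A (Suc i) j - A i j) / sqrt (A (Suc i) j))" if i: "i < N" for i
    proof (cases "a i j = 0")
      case True thus ?thesis using Amono[of i j] A0[of "Suc i" j] by (simp add: w_def)
    next
      case False
      hence ap: "a i j > 0" using a0[of i j] by simp
      have AS: "A (Suc i) j = A i j + a i j" unfolding A_def by simp
      hence Apos: "A (Suc i) j > 0" using ap A0[of i j] by simp
      have "A (Suc i) j \<le> 5 * Q (Suc i) j" unfolding A_def using AQ[of "Suc i" j] i by simp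
      hence "A (Suc i) j / 5 \<le> z (Suc i) j" using zQ[of "Suc i" j] by simp
      hence "sqrt (A (Suc i) j / 5) \<le> sqrt (z (Suc i) j)" by simp
      hence le: "sqrt (A (Suc i) j) / sqrt 5 \<le> sqrt (z (Suc i) j)" by (simp add: real_sqrt_divide)
      have pos: "0 < sqrt (A (Suc i) j) / sqrt 5" using Apos by simp
      have "a i j * w i j = a i j / sqrt (z (Suc i) j)" by (simp add: w_def)
      also have "\<dots> \<le> a i j / (sqrt (A (Suc i) j) / sqrt 5)"
      proof -
        have zp: "0 < sqrt (z (Suc i) j)" using le pos by linarith
        have "0 < sqrt (z (Suc i) j) * sqrt (A (Suc i) j) / sqrt 5"
          using zp Apos by simp
        thus ?thesis using le pos ap by (intro divide_left_mono) auto
      qed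
      also have "\<dots> = sqrt 5 * ((A (Suc i) j - A i j) / sqrt (A (Suc i) j))" using AS by simp
      finally show ?thesis .
    qed
    hence "(\<Sum>i<N. a i j * w i j) \<le> (\<Sum>i<N. sqrt 5 * ((A (Suc i) j - A i j) / sqrt (A (Suc i) j)))"
      by (intro sum_mono) auto
    also have "\<dots> = sqrt 5 * (\<Sum>i<N. (A (Suc i) j - A i j) / sqrt (A (Suc i) j))"
      by (simp add: sum_distrib_left)
    also have "(\<Sum>i<N. (A (Suc i) j - A i j) / sqrt (A (Suc i) j)) \<le> 2 * sqrt (A N j) - 2 * sqrt (A 0 j)"
      by (rule tele2[of "\<lambda>k. A k j"]) (auto intro: A0 Amono)
    also have "\<dots> \<le> 2 * sqrt (Z j)" using AZ[of j] by (simp add: A_def)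
    finally show ?thesis by (simp add: mult_left_mono)
  qed
  have "(\<Sum>j<2^L. sqrt (\<Sum>i<N. b i j)) \<le> (\<Sum>j<2^L. (\<Sum>i<N. b i j * w i j) + 2 * sqrt (Z j))"
    by (intro sum_mono pw)
  also have "\<dots> = (\<Sum>i<N. \<Sum>j<2^L. w i j * b i j) + 2 * (\<Sum>j<2^L. sqrt (Z j))"
    by (simp add: sum.distrib sum_distrib_left mult.commute sum.swap[of _ "{..<N}"])
  also have "(\<Sum>i<N. \<Sum>j<2^L. w i j * b i j) = (\<Sum>i<N. \<Sum>j<2^L. w i j * a i j)"
  proof (rule sum.cong[OF refl])
    fix i assume "i \<in> {..<N}"
    hence i: "i < N" by simp
    show "(\<Sum>j<2^L. w i j * b i j) = (\<Sum>j<2^L. w i j * a i j)"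
      unfolding b_def by (rule ce_prop[OF nL[OF i] wbc[OF i]])
  qed
  also have "\<dots> = (\<Sum>j<2^L. \<Sum>i<N. a i j * w i j)"
    by (simp add: sum.swap[of _ "{..<N}"] mult.commute)
  also have "\<dots> \<le> (\<Sum>j<2^L. 2 * sqrt 5 * sqrt (Z j))"
    by (intro sum_mono pw2)
  finally show ?thesis unfolding b_def by (simp add: sum_distrib_left algebra_simps)
qed

lemma phi_id:
  fixes g :: "nat \<Rightarrow> real"
  assumes "n \<le> L" "\<And>j. 0 \<le> g j"
  shows "(\<Sum>J<2^n. sqrt (1 / 2^n) * sqrt ((\<Sum>r<2^(L-n). g (J * 2^(L-n) + r)) / 2^L))
       = (\<Sum>j<2^L. sqrt (ce L n g j)) / 2^L"
proof -
  let ?d = "(2::nat)^(L-n)"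
  have dv: "(J * ?d + r) div ?d = J" if "r < ?d" for J r using that by simp
  have eL: "(2::real)^L = 2^n * 2^(L-n)" using assms(1) by (simp add: power_add[symmetric])
  have "(\<Sum>j<2^L. sqrt (ce L n g j)) = (\<Sum>J<2^n. \<Sum>r<?d. sqrt (ce L n g (J * ?d + r)))"
    by (rule sum_blocks[OF assms(1)])
  also have "\<dots> = (\<Sum>J<2^n. 2^(L-n) * sqrt ((\<Sum>r<?d. g (J * ?d + r)) / 2^(L-n)))"
  proof (rule sum.cong[OF refl])
    fix J
    have "(\<Sum>r<?d. sqrt (ce L n g (J * ?d + r))) = (\<Sum>r<?d. sqrt ((\<Sum>r'<?d. g (J * ?d + r')) / 2^(L-n)))"
    proof (rule sum.cong[OF refl])
      fix r assume "r \<in> {..<?d}"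
      hence "r < ?d" by simp
      thus "sqrt (ce L n g (J * ?d + r)) = sqrt ((\<Sum>r'<?d. g (J * ?d + r')) / 2^(L-n))"
        unfolding ce_def using dv by simp
    qed
    thus "(\<Sum>r<?d. sqrt (ce L n g (J * ?d + r))) = 2^(L-n) * sqrt ((\<Sum>r<?d. g (J * ?d + r)) / 2^(L-n))"
      by simp
  qed
  finally have e1: "(\<Sum>j<2^L. sqrt (ce L n g j)) / 2^L = (\<Sum>J<2^n. 2^(L-n) * sqrt ((\<Sum>r<?d. g (J * ?d + r)) / 2^(L-n)) / 2^L)"
    by (simp add: sum_divide_distrib)
  have e2: "sqrt (1 / 2^n) * sqrt (X / 2^L) = 2^(L-n) * sqrt (X / 2^(L-n)) / 2^L" if X: "0 \<le> X" for X :: real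
  proof -
    define p :: real where "p = 2^n"
    define d :: real where "d = 2^(L-n)"
    have p: "p > 0" and d: "d > 0" by (auto simp: p_def d_def)
    have L: "(2::real)^L = p * d" unfolding p_def d_def eL ..
    have "sqrt (1 / p) * sqrt (X / (p*d)) = sqrt (X / (p * p * d))"
      by (simp add: real_sqrt_mult[symmetric] mult_ac)
    also have "X / (p * p * d) = (d * d) * (X / d) / ((p * d) * (p * d))"
      using p d by (simp add: field_simps)
    also have "sqrt \<dots> = d * sqrt (X / d) / (p * d)"
      using p d X by (simp add: real_sqrt_mult real_sqrt_divide)
    finally show ?thesis unfolding L by (simp add: p_def d_def)
  qed
  show ?thesis unfolding e1
    by (intro sum.cong refl e2 sum_nonneg) (use assms(2) in auto)
qed

lemma discrete_main:
  fixes \<phi> :: "nat \<Rightarrow> nat \<Rightarrow> real" and M :: "nat \<Rightarrow> nat" and s N L :: nat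
  assumes hML: "\<And>i. i < N \<Longrightarrow> M i \<le> L"
    and Mmono: "\<And>l i. l \<le> i \<Longrightarrow> M l \<le> M i"
    and \<phi>bc: "\<And>i. i < N \<Longrightarrow> bc L (M i) (\<phi> i)"
  defines "v \<equiv> \<lambda>i j. if good s \<phi> i j then \<phi> i j else 0"
    and "u \<equiv> \<lambda>i j. if good s \<phi> i j then 0 else \<phi> i j"
  shows "(\<Sum>i<N. (\<Sum>j<2^L. \<bar>u i j\<bar>) / 2^L) \<le> 2 * sqrt s * ((\<Sum>j<2^L. sqrt (S2 \<phi> N j)) / 2^L)"
    and "sqrt (\<Sum>i<N. (\<Sum>J<2^M (i-s). sqrt (1 / 2^M (i-s)) *
            sqrt ((\<Sum>r<2^(L - M (i-s)). (v i (J * 2^(L - M (i-s)) + r))\<^sup>2) / 2^L))\<^sup>2)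
          \<le> (2 * sqrt 5 + 2) * ((\<Sum>j<2^L. sqrt (S2 \<phi> N j)) / 2^L)"
proof -
  have pt: "(\<Sum>i<N. \<bar>u i j\<bar>) \<le> 2 * sqrt s * sqrt (S2 \<phi> N j)" for j
    using bad_sum[where x="\<lambda>l. \<phi> l j" and n=N and s=s] unfolding u_def good_def S2_def
    by (simp add: if_distrib)
  have "(\<Sum>i<N. (\<Sum>j<2^L. \<bar>u i j\<bar>) / 2^L) = (\<Sum>j<2^L. \<Sum>i<N. \<bar>u i j\<bar>) / 2^L"
    by (simp add: sum_divide_distrib[symmetric] sum.swap[of _ "{..<N}"])
  also have "\<dots> \<le> (\<Sum>j<2^L. 2 * sqrt s * sqrt (S2 \<phi> N j)) / 2^L"
    by (intro divide_right_mono sum_mono pt) auto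
  finally show "(\<Sum>i<N. (\<Sum>j<2^L. \<bar>u i j\<bar>) / 2^L) \<le> 2 * sqrt s * ((\<Sum>j<2^L. sqrt (S2 \<phi> N j)) / 2^L)"
    by (simp add: sum_distrib_left)
next
  define n where "n i = M (i - s)" for i
  define a where "a i j = (v i j)\<^sup>2" for i j
  have nL: "n i \<le> L" if "i < N" for i using hML[of "i-s"] that unfolding n_def by simp
  have id: "(\<Sum>J<2^M (i-s). sqrt (1 / 2^M (i-s)) *
            sqrt ((\<Sum>r<2^(L - M (i-s)). (v i (J * 2^(L - M (i-s)) + r))\<^sup>2) / 2^L))
        = (\<Sum>j<2^L. sqrt (ce L (n i) (a i) j)) / 2^L" if "i < N" for i
    using phi_id[OF nL[OF that], of "a i"] unfolding a_def n_def by simp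
  have "sqrt (\<Sum>i<N. (\<Sum>J<2^M (i-s). sqrt (1 / 2^M (i-s)) *
            sqrt ((\<Sum>r<2^(L - M (i-s)). (v i (J * 2^(L - M (i-s)) + r))\<^sup>2) / 2^L))\<^sup>2)
      = L2_set (\<lambda>i. \<Sum>j<2^L. sqrt (ce L (n i) (a i) j) / 2^L) {..<N}"
    unfolding L2_set_def using id by (simp add: sum_divide_distrib)
  also have "\<dots> \<le> (\<Sum>j<2^L. L2_set (\<lambda>i. sqrt (ce L (n i) (a i) j) / 2^L) {..<N})"
    by (rule L2_set_sum_le)
  also have "\<dots> = (\<Sum>j<2^L. sqrt (\<Sum>i<N. ce L (n i) (a i) j)) / 2^L"
  proof -
    have "L2_set (\<lambda>i. sqrt (ce L (n i) (a i) j) / 2^L) {..<N} = sqrt (\<Sum>i<N. ce L (n i) (a i) j) / 2^L" for j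
    proof -
      have "L2_set (\<lambda>i. sqrt (ce L (n i) (a i) j) / 2^L) {..<N} = L2_set (\<lambda>i. sqrt (ce L (n i) (a i) j)) {..<N} / 2^L"
        using L2_set_right_distrib[of "1/2^L" "\<lambda>i. sqrt (ce L (n i) (a i) j)" "{..<N}"]
        by (simp add: divide_inverse mult.commute)
      moreover have "L2_set (\<lambda>i. sqrt (ce L (n i) (a i) j)) {..<N} = sqrt (\<Sum>i<N. ce L (n i) (a i) j)"
        unfolding L2_set_def using ce_nonneg[of "a _"] by (simp add: a_def)
      ultimately show ?thesis by simp
    qed
    thus ?thesis by (simp add: sum_divide_distrib)
  qed
  also have "\<dots> \<le> (2 * sqrt 5 + 2) * (\<Sum>j<2^L. sqrt (S2 \<phi> N j)) / 2^L"
  proof (intro divide_right_mono)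
    show "(\<Sum>j<2^L. sqrt (\<Sum>i<N. ce L (n i) (a i) j)) \<le> (2 * sqrt 5 + 2) * (\<Sum>j<2^L. sqrt (S2 \<phi> N j))"
    proof (rule garsia[where Q = "\<lambda>k j. S2 \<phi> (k - s) j"])
      show "\<And>i. i < N \<Longrightarrow> n i \<le> L" by (rule nL)
      show "\<And>l i. l \<le> i \<Longrightarrow> i < N \<Longrightarrow> n l \<le> n i" unfolding n_def by (intro Mmono) simp
      show "\<And>i j. 0 \<le> a i j" unfolding a_def by simp
      show "\<And>k j. 0 \<le> S2 \<phi> (k - s) j" by (rule S2_nonneg)
      show "\<And>j. S2 \<phi> (0 - s) j = 0" by (simp add: S2_def)
      show "\<And>k j. S2 \<phi> (k - s) j \<le> S2 \<phi> (Suc k - s) j" by (intro S2_mono) simp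
      show "bc L (n i) (S2 \<phi> (Suc i - s))" if i: "i < N" for i
      proof -
        have "bc L (n i) (\<lambda>j. (\<phi> l j)\<^sup>2)" if "l \<in> {..<Suc i - s}" for l
        proof -
          have "l \<le> i - s" "l < N" using that i by auto
          hence "bc L (n i) (\<phi> l)" unfolding n_def
            using bc_mono[OF Mmono hML \<phi>bc] i by (metis diff_le_self le_less_trans)
          thus ?thesis by (rule bc_comp)
        qed
        hence "bc L (n i) (\<lambda>j. \<Sum>l<Suc i - s. (\<phi> l j)\<^sup>2)" by (rule bc_sum)
        thus ?thesis unfolding S2_def[abs_def] .
      qed
      show "(\<Sum>l<k. a l j) \<le> 5 * S2 \<phi> (k - s) j" for k j
      proof (induction k)
        case 0 thus ?case by (simp add: S2_def)
      next
        case (Suc k)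
        show ?case
        proof (cases "good s \<phi> k j")
          case True
          have "(\<Sum>l<Suc k. a l j) \<le> (\<Sum>l<Suc k. (\<phi> l j)\<^sup>2)"
            unfolding a_def v_def by (intro sum_mono) auto
          also have "\<dots> \<le> 5 * S2 \<phi> (Suc k - s) j" using True unfolding good_def S2_def by simp
          finally show ?thesis .
        next
          case False
          hence "(\<Sum>l<Suc k. a l j) = (\<Sum>l<k. a l j)" by (simp add: a_def v_def)
          also have "\<dots> \<le> 5 * S2 \<phi> (k - s) j" by (rule Suc.IH)
          also have "\<dots> \<le> 5 * S2 \<phi> (Suc k - s) j" by (simp add: S2_mono)
          finally show ?thesis .
        qed
      qed
      show "\<And>j. S2 \<phi> (N - s) j \<le> S2 \<phi> N j" by (intro S2_mono) simp
      show "(\<Sum>l<N. a l j) \<le> S2 \<phi> N j" for j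
        unfolding a_def v_def S2_def by (intro sum_mono) auto
    qed
  qed simp
  finally show "sqrt (\<Sum>i<N. (\<Sum>J<2^M (i-s). sqrt (1 / 2^M (i-s)) *
            sqrt ((\<Sum>r<2^(L - M (i-s)). (v i (J * 2^(L - M (i-s)) + r))\<^sup>2) / 2^L))\<^sup>2)
          \<le> (2 * sqrt 5 + 2) * ((\<Sum>j<2^L. sqrt (S2 \<phi> N j)) / 2^L)" by simp
qed




definition idx :: "nat \<Rightarrow> real \<Rightarrow> nat" where
  "idx n x = nat \<lfloor>x * 2^n\<rfloor>"

lemma mem_dyadic_int: "x \<in> dyadic_int n j \<longleftrightarrow> 0 \<le> x \<and> \<lfloor>x * 2^n\<rfloor> = int j"
proof -
  have p: "(0::real) < 2^n" by simp
  have "x \<in> dyadic_int n j \<longleftrightarrow> real j \<le> x * 2^n \<and> x * 2^n < real j + 1"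
    unfolding dyadic_int_def using p by (simp add: pos_divide_le_eq pos_less_divide_eq)
  also have "\<dots> \<longleftrightarrow> \<lfloor>x * 2^n\<rfloor> = int j" by (simp add: floor_eq_iff)
  also have "\<dots> \<longleftrightarrow> 0 \<le> x \<and> \<lfloor>x * 2^n\<rfloor> = int j"
  proof
    assume h: "\<lfloor>x * 2^n\<rfloor> = int j"
    hence "0 \<le> \<lfloor>x * 2^n\<rfloor>" by simp
    hence "0 \<le> x * 2^n" by simp
    thus "0 \<le> x \<and> \<lfloor>x * 2^n\<rfloor> = int j" using h p by (simp add: zero_le_mult_iff)
  qed simp
  finally show ?thesis .
qed

lemma idx_mem: "0 \<le> x \<Longrightarrow> x \<in> dyadic_int n (idx n x)"
  unfolding mem_dyadic_int idx_def by simp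

lemma mem_idx: "x \<in> dyadic_int n j \<Longrightarrow> idx n x = j"
  unfolding mem_dyadic_int idx_def by simp

lemma dyadic_int_sub: "j < 2^n \<Longrightarrow> dyadic_int n j \<subseteq> {0..<1}"
proof
  fix x assume j: "j < 2^n" and x: "x \<in> dyadic_int n j"
  have "j + 1 \<le> 2^n" using j by simp
  hence "real (j + 1) \<le> real (2^n)" by (simp only: of_nat_le_iff)
  hence "real j + 1 \<le> 2^n" by simp
  hence "(real j + 1) / 2^n \<le> 1" by simp
  moreover have "0 \<le> x" using x mem_dyadic_int by blast
  moreover have "x < (real j + 1) / 2^n" using x unfolding dyadic_int_def by auto
  ultimately have "x < 1" by linarith
  thus "x \<in> {0..<1}" using \<open>0 \<le> x\<close> by simp
qed

lemma idx_lt: "0 \<le> x \<Longrightarrow> x < 1 \<Longrightarrow> idx n x < 2^n"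
proof -
  assume x: "0 \<le> x" "x < 1"
  have "x * 2^n < 2^n" using x by simp
  hence "\<lfloor>x * 2^n\<rfloor> < 2^n" using floor_less_iff[of "x * 2^n" "2^n"] by simp
  moreover have "0 \<le> \<lfloor>x * 2^n\<rfloor>" using x by simp
  ultimately have "nat \<lfloor>x * 2^n\<rfloor> < nat (2^n)" by (simp add: nat_less_eq_zless)
  thus ?thesis unfolding idx_def by (simp add: nat_power_eq)
qed

lemma dm_iff: "dyadic_meas n f \<longleftrightarrow>
   (\<forall>x y. 0 \<le> x \<longrightarrow> x < 1 \<longrightarrow> 0 \<le> y \<longrightarrow> y < 1 \<longrightarrow> idx n x = idx n y \<longrightarrow> f x = f y)"
  unfolding dyadic_meas_def
proof safe
  fix x y assume h: "\<forall>j<2^n. \<forall>x\<in>dyadic_int n j. \<forall>y\<in>dyadic_int n j. f x = f y"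
    and x: "0 \<le> x" "x < 1" and y: "0 \<le> y" "y < 1" and e: "idx n x = idx n y"
  show "f x = f y" using h[rule_format, OF idx_lt[OF x], OF idx_mem[OF x(1)]] idx_mem[OF y(1)] e by simp
next
  fix j x y assume h: "\<forall>x y. 0 \<le> x \<longrightarrow> x < 1 \<longrightarrow> 0 \<le> y \<longrightarrow> y < 1 \<longrightarrow> idx n x = idx n y \<longrightarrow> f x = f y"
    and j: "j < 2^n" and x: "x \<in> dyadic_int n j" and y: "y \<in> dyadic_int n j"
  have "x \<in> {0..<1}" "y \<in> {0..<1}" using dyadic_int_sub[OF j] x y by auto
  thus "f x = f y" using h mem_idx[OF x] mem_idx[OF y] by auto
qed

lemma idx_div:
  assumes "0 \<le> x" "n \<le> L"
  shows "idx n x = idx L x div 2^(L-n)"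
proof -
  have e: "(2::real)^L = 2^n * 2^(L-n)" using assms(2) by (simp add: power_add[symmetric])
  have "x * 2^n = (x * 2^L) / real_of_int (2^(L-n))" unfolding e by simp
  hence "\<lfloor>x * 2^n\<rfloor> = \<lfloor>x * 2^L\<rfloor> div 2^(L-n)"
    using floor_divide_real_eq_div[of "2^(L-n)" "x * 2^L"] by simp
  moreover have "0 \<le> \<lfloor>x * 2^L\<rfloor>" using assms by simp
  ultimately show ?thesis unfolding idx_def by (simp add: nat_div_distrib nat_power_eq)
qed

lemma ind_idx: "0 \<le> x \<Longrightarrow> indicator (dyadic_int n J) x = (if idx n x = J then 1 else 0)"
  unfolding mem_dyadic_int idx_def indicator_def by auto

lemma dmD: "dyadic_meas n f \<Longrightarrow> 0 \<le> x \<Longrightarrow> x < 1 \<Longrightarrow> 0 \<le> y \<Longrightarrow> y < 1 \<Longrightarrow> idx n x = idx n y \<Longrightarrow> f x = f y"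
  unfolding dm_iff by blast

lemma dm_mono:
  assumes "n \<le> n'" "dyadic_meas n f"
  shows "dyadic_meas n' f"
  unfolding dm_iff
proof (intro allI impI)
  fix x y :: real assume x: "0 \<le> x" "x < 1" and y: "0 \<le> y" "y < 1" and e: "idx n' x = idx n' y"
  have "idx n x = idx n y" using idx_div[OF x(1) assms(1)] idx_div[OF y(1) assms(1)] e by simp
  thus "f x = f y" using assms(2) x y unfolding dm_iff by blast
qed

lemma dm_ind:
  assumes "n \<le> n'" "dyadic_meas n' v"
  shows "dyadic_meas n' (\<lambda>x. v x * indicator (dyadic_int n J) x)"
  unfolding dm_iff
proof (intro allI impI)
  fix x y :: real assume x: "0 \<le> x" "x < 1" and y: "0 \<le> y" "y < 1" and e: "idx n' x = idx n' y"
  have "idx n x = idx n y" using idx_div[OF x(1) assms(1)] idx_div[OF y(1) assms(1)] e by simp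
  moreover have "v x = v y" using assms(2) x y e unfolding dm_iff by blast
  ultimately show "v x * indicator (dyadic_int n J) x = v y * indicator (dyadic_int n J) y"
    by (simp only: ind_idx[OF x(1)] ind_idx[OF y(1)])
qed

lemma dm_out: "dyadic_meas n (\<lambda>x. v x * indicator (- {0..<1}) x)"
  unfolding dm_iff by simp

lemma dm_add: assumes "dyadic_meas n f" "dyadic_meas n g" shows "dyadic_meas n (\<lambda>x. f x + g x)"
  unfolding dm_iff
proof (intro allI impI)
  fix x y :: real assume h: "0 \<le> x" "x < 1" "0 \<le> y" "y < 1" "idx n x = idx n y"
  have "f x = f y" "g x = g y" using dmD[OF assms(1) h] dmD[OF assms(2) h] by auto
  thus "f x + g x = f y + g y" by simp
qed

lemma dm_sum: assumes "\<And>i. i \<in> A \<Longrightarrow> dyadic_meas n (f i)" shows "dyadic_meas n (\<lambda>x. \<Sum>i\<in>A. f i x)"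
  unfolding dm_iff
proof (intro allI impI)
  fix x y :: real assume h: "0 \<le> x" "x < 1" "0 \<le> y" "y < 1" "idx n x = idx n y"
  have "f i x = f i y" if "i \<in> A" for i using dmD[OF assms[OF that] h] .
  thus "(\<Sum>i\<in>A. f i x) = (\<Sum>i\<in>A. f i y)" by (rule sum.cong[OF refl])
qed

lemma dm_zero: "dyadic_meas n (\<lambda>x. 0)"
  unfolding dm_iff by simp




lemma step_int:
  assumes h: "\<And>x. 0 \<le> x \<Longrightarrow> x < 1 \<Longrightarrow> h x = G (idx L x)" and G0: "\<And>j. 0 \<le> G j"
  shows "(\<integral>\<^sup>+x. ennreal (h x) \<partial>unitI) = ennreal ((\<Sum>j<2^L. G j) / 2^L)"
proof -
  have sets: "{0..1::real} \<inter> space lborel \<in> sets lborel" by simp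
  have dsets: "dyadic_int L j \<in> sets lborel" for j unfolding dyadic_int_def by simp
  have "(\<integral>\<^sup>+x. ennreal (h x) \<partial>unitI) = (\<integral>\<^sup>+x. ennreal (h x) * indicator {0..1} x \<partial>lborel)"
    unfolding unitI_def by (rule nn_integral_restrict_space[OF sets])
  also have "\<dots> = (\<integral>\<^sup>+x. (\<Sum>j<2^L. ennreal (G j) * indicator (dyadic_int L j) x) \<partial>lborel)"
  proof (rule nn_integral_cong_AE)
    show "AE x in lborel. ennreal (h x) * indicator {0..1} x = (\<Sum>j<2^L. ennreal (G j) * indicator (dyadic_int L j) x)"
      using AE_lborel_singleton[of "1::real"]
    proof eventually_elim
      fix x :: real assume x1: "x \<noteq> 1"
      show "ennreal (h x) * indicator {0..1} x = (\<Sum>j<2^L. ennreal (G j) * indicator (dyadic_int L j) x)"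
      proof (cases "0 \<le> x \<and> x < 1")
        case True
        have "(\<Sum>j<2^L. ennreal (G j) * indicator (dyadic_int L j) x) = (\<Sum>j<2^L. if idx L x = j then ennreal (G j) else 0)"
          using True by (intro sum.cong refl) (simp add: ind_idx)
        also have "\<dots> = ennreal (G (idx L x))" using idx_lt[of x L] True by simp
        finally show ?thesis using True h by simp
      next
        case False
        hence "x \<notin> {0..1}" using x1 by auto
        moreover have "x \<notin> dyadic_int L j" if "j < 2^L" for j using dyadic_int_sub[OF that] False by auto
        ultimately show ?thesis by simp
      qed
    qed
  qed
  also have "\<dots> = (\<Sum>j<2^L. (\<integral>\<^sup>+x. ennreal (G j) * indicator (dyadic_int L j) x \<partial>lborel))"
    by (rule nn_integral_sum) (use dsets in auto)
  also have "\<dots> = (\<Sum>j<2^L. ennreal (G j) * emeasure lborel (dyadic_int L j))"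
    by (intro sum.cong refl nn_integral_cmult_indicator dsets)
  also have "\<dots> = (\<Sum>j<2^L. ennreal (G j / 2^L))"
  proof (intro sum.cong refl)
    fix j
    have "emeasure lborel (dyadic_int L j) = ennreal ((real j + 1) / 2^L - real j / 2^L)"
      unfolding dyadic_int_def by (intro emeasure_lborel_Ico) (simp add: divide_right_mono)
    also have "\<dots> = ennreal (1 / 2^L)" by (simp add: diff_divide_distrib[symmetric])
    finally show "ennreal (G j) * emeasure lborel (dyadic_int L j) = ennreal (G j / 2^L)"
      using G0[of j] by (simp add: ennreal_mult''[symmetric] divide_inverse)
  qed
  also have "\<dots> = ennreal ((\<Sum>j<2^L. G j) / 2^L)"
    using G0 by (simp add: sum_divide_distrib)
  finally show ?thesis .
qed

lemma esqrt_ennreal: "0 \<le> r \<Longrightarrow> esqrt (ennreal r) = ennreal (sqrt r)"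
  unfolding esqrt_def by simp

lemma esqrt_le_iff: "esqrt x \<le> y \<longleftrightarrow> x \<le> y ^ 2"
proof (cases x)
  case (real a)
  note ha = real
  show ?thesis
  proof (cases y)
    case (real b)
    have "esqrt x \<le> y \<longleftrightarrow> sqrt a \<le> b" using real ha by (simp add: esqrt_ennreal)
    also have "\<dots> \<longleftrightarrow> a \<le> b ^ 2" using real \<open>0 \<le> a\<close> by (simp add: real_sqrt_le_iff' sqrt_le_D real_le_rsqrt)
    also have "\<dots> \<longleftrightarrow> x \<le> y ^ 2" using real \<open>x = ennreal a\<close> \<open>0 \<le> a\<close> by (simp add: ennreal_power)
    finally show ?thesis .
  next
    case top thus ?thesis by simp
  qed
next
  case top
  have "y ^ 2 = top \<longleftrightarrow> y = top" by (simp add: power_eq_top_ennreal_iff)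
  thus ?thesis using top by (auto simp: esqrt_def top_unique)
qed

lemma esqrt_sq: "(esqrt x) ^ 2 = x"
proof (cases x)
  case (real a) thus ?thesis by (simp add: esqrt_ennreal ennreal_power)
next
  case top thus ?thesis by (simp add: esqrt_def)
qed

lemma esqrt_sq2: "esqrt (y ^ 2) = y"
proof (cases y)
  case (real b) thus ?thesis by (simp add: esqrt_ennreal ennreal_power)
next
  case top thus ?thesis by (simp add: esqrt_def)
qed

lemma esqrt_mono: "x \<le> y \<Longrightarrow> esqrt x \<le> esqrt y"
  by (simp add: esqrt_le_iff esqrt_sq)

lemma esqrt_SUP: "esqrt (SUP i. a i) = (SUP i. esqrt (a i))"
proof (rule antisym)
  show "esqrt (SUP i. a i) \<le> (SUP i. esqrt (a i))"
    unfolding esqrt_le_iff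
  proof (rule SUP_least)
    fix i
    have "esqrt (a i) \<le> (SUP i. esqrt (a i))" by (rule SUP_upper) simp
    thus "a i \<le> (SUP i. esqrt (a i)) ^ 2" by (simp add: esqrt_le_iff)
  qed
  show "(SUP i. esqrt (a i)) \<le> esqrt (SUP i. a i)"
    by (intro SUP_least esqrt_mono SUP_upper) simp
qed

lemma le_esqrt: "y ^ 2 \<le> x \<Longrightarrow> y \<le> esqrt x"
  using esqrt_mono[of "y^2" x] by (simp add: esqrt_sq2)

lemma prob_unitI: "prob_space unitI"
  unfolding unitI_def by (intro prob_space_restrict_space) auto

lemma space_unitI: "space unitI = {0..1}"
  unfolding unitI_def by (simp add: space_restrict_space)

lemma marg:
  assumes g: "g \<in> borel_measurable unitI"
  shows "(\<integral>\<^sup>+\<omega>. g (\<omega> k) \<partial>PiM UNIV (\<lambda>_. unitI)) = (\<integral>\<^sup>+x. g x \<partial>unitI)"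
proof -
  have d: "distr (PiM UNIV (\<lambda>_. unitI)) unitI (\<lambda>\<omega>. \<omega> k) = unitI"
    by (rule distr_PiM_component) (auto simp: prob_unitI)
  have "(\<integral>\<^sup>+x. g x \<partial>unitI) = (\<integral>\<^sup>+x. g x \<partial>distr (PiM UNIV (\<lambda>_. unitI)) unitI (\<lambda>\<omega>. \<omega> k))"
    using d by simp
  also have "\<dots> = (\<integral>\<^sup>+\<omega>. g (\<omega> k) \<partial>PiM UNIV (\<lambda>_. unitI))"
    by (rule nn_integral_distr) (use g d in auto)
  finally show ?thesis by simp
qed

lemma jensen_sqrt:
  assumes P: "prob_space M" and h: "h \<in> borel_measurable M" and h0: "\<And>x. 0 \<le> h x"
  shows "(\<integral>\<^sup>+x. ennreal (sqrt (h x)) \<partial>M) \<le> esqrt (\<integral>\<^sup>+x. ennreal (h x) \<partial>M)"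
proof -
  have m: "(\<lambda>x. ennreal (sqrt (h x))) \<in> borel_measurable M" using h by measurable
  have "(\<integral>\<^sup>+x. ennreal (sqrt (h x)) * 1 \<partial>M)^2 \<le> (\<integral>\<^sup>+x. (ennreal (sqrt (h x)))^2 \<partial>M) * (\<integral>\<^sup>+x. 1 ^ 2 \<partial>M)"
    by (rule Cauchy_Schwarz_nn_integral) (use m in auto)
  also have "(\<integral>\<^sup>+x. 1 ^ 2 \<partial>M) = 1" using P by (simp add: prob_space.emeasure_space_1)
  also have "(\<integral>\<^sup>+x. (ennreal (sqrt (h x)))^2 \<partial>M) = (\<integral>\<^sup>+x. ennreal (h x) \<partial>M)"
    using h0 by (intro nn_integral_cong) (simp add: ennreal_power)
  finally show ?thesis by (intro le_esqrt) simp
qed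




lemma sub_zero:
  assumes "sublinear_on P T" "P (\<lambda>y. 0)"
  shows "AE x in unitI. T (\<lambda>y. 0) x = 0"
proof -
  have "AE x in unitI. \<bar>T (\<lambda>y. 0 * (\<lambda>y. 0) y) x\<bar> = \<bar>0\<bar> * \<bar>T (\<lambda>y. 0) x\<bar>"
    using assms unfolding sublinear_on_def by blast
  thus ?thesis by simp
qed

lemma sub_add:
  assumes "sublinear_on P T" "P f" "P g"
  shows "AE x in unitI. \<bar>T (\<lambda>y. f y + g y) x\<bar> \<le> \<bar>T f x\<bar> + \<bar>T g x\<bar>"
  using assms unfolding sublinear_on_def by blast

lemma sub_sum:
  assumes S: "sublinear_on (dyadic_meas n) T" and g: "\<And>J. J \<in> A \<Longrightarrow> dyadic_meas n (g J)" and A: "finite A"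
  shows "AE x in unitI. \<bar>T (\<lambda>y. \<Sum>J\<in>A. g J y) x\<bar> \<le> (\<Sum>J\<in>A. \<bar>T (g J) x\<bar>)"
  using A g
proof (induction A rule: finite_induct)
  case empty
  show ?case using sub_zero[OF S dm_zero] by (auto elim: AE_mp)
next
  case (insert a F)
  have e: "(\<lambda>y. \<Sum>J\<in>insert a F. g J y) = (\<lambda>y. g a y + (\<Sum>J\<in>F. g J y))"
    using insert by simp
  have dF: "dyadic_meas n (\<lambda>y. \<Sum>J\<in>F. g J y)" using insert by (intro dm_sum) auto
  have A1: "AE x in unitI. \<bar>T (\<lambda>y. g a y + (\<Sum>J\<in>F. g J y)) x\<bar> \<le> \<bar>T (g a) x\<bar> + \<bar>T (\<lambda>y. \<Sum>J\<in>F. g J y) x\<bar>"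
    using insert.prems by (intro sub_add[OF S] dF) auto
  have A2: "AE x in unitI. \<bar>T (\<lambda>y. \<Sum>J\<in>F. g J y) x\<bar> \<le> (\<Sum>J\<in>F. \<bar>T (g J) x\<bar>)"
    using insert.IH insert.prems by auto
  have "AE x in unitI. \<bar>T (\<lambda>y. g a y + (\<Sum>J\<in>F. g J y)) x\<bar> \<le> \<bar>T (g a) x\<bar> + (\<Sum>J\<in>F. \<bar>T (g J) x\<bar>)"
    using A1 A2 by eventually_elim simp
  thus ?case unfolding e using insert.hyps by simp
qed

locale setting =
  fixes mk :: "nat \<Rightarrow> nat" and s :: nat and T :: "nat \<Rightarrow> (real \<Rightarrow> real) \<Rightarrow> (real \<Rightarrow> real)"
    and C1 C2 :: real and f :: "nat \<Rightarrow> real \<Rightarrow> real"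
  assumes mk_mono: "\<And>k. k \<ge> 1 \<Longrightarrow> mk k < mk (Suc k)"
    and C1: "C1 \<ge> 0" and C2: "C2 \<ge> 0"
    and subl: "\<And>k. k \<ge> 1 \<Longrightarrow> sublinear_on (dyadic_meas (mk k)) (T k)"
    and Tmeas: "\<And>k g. k \<ge> 1 \<Longrightarrow> dyadic_meas (mk k) g \<Longrightarrow> T k g \<in> borel_measurable unitI"
    and TL1: "\<And>k g. k \<ge> 1 \<Longrightarrow> dyadic_meas (mk k) g \<Longrightarrow> L1n (T k g) \<le> ennreal C1 * L1n g"
    and TL2: "\<And>k g m i j. k \<ge> 1 \<Longrightarrow> dyadic_meas (mk k) g \<Longrightarrow> i < 2 ^ m \<Longrightarrow>
          (\<forall>x\<in>{0..1}. g x \<noteq> 0 \<longrightarrow> x \<in> dyadic_int m i) \<Longrightarrow> 1 \<le> j \<Longrightarrow> m \<le> mk j \<Longrightarrow> j + s \<le> k \<Longrightarrow>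
          L2n (T k g) \<le> ennreal (C2 * sqrt (1 / 2 ^ m)) * L2n g"
    and fm: "\<And>k. k \<ge> 1 \<Longrightarrow> dyadic_meas (mk k) (f k)"
begin

definition M :: "nat \<Rightarrow> nat" where "M i = mk (Suc i)"
definition F :: "nat \<Rightarrow> real \<Rightarrow> real" where "F i = f (Suc i)"
definition TT :: "nat \<Rightarrow> (real \<Rightarrow> real) \<Rightarrow> (real \<Rightarrow> real)" where "TT i = T (Suc i)"
definition ux :: "nat \<Rightarrow> real \<Rightarrow> real" where "ux i x = (if good s F i x then 0 else F i x)"
definition vx :: "nat \<Rightarrow> real \<Rightarrow> real" where "vx i x = (if good s F i x then F i x else 0)"

lemma M_mono: "l \<le> i \<Longrightarrow> M l \<le> M i"
proof (induction i)
  case 0 thus ?case by simp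
next
  case (Suc i)
  show ?case
  proof (cases "l = Suc i")
    case True thus ?thesis by simp
  next
    case False
    hence "M l \<le> M i" using Suc by simp
    also have "M i \<le> M (Suc i)" unfolding M_def using mk_mono[of "Suc i"] by simp
    finally show ?thesis .
  qed
qed

lemma F_dm: "dyadic_meas (M i) (F i)"
  unfolding M_def F_def by (rule fm) simp

lemma F_dm_mono: "l \<le> i \<Longrightarrow> dyadic_meas (M i) (F l)"
  by (rule dm_mono[OF M_mono F_dm])

lemma good_cong:
  assumes "\<And>l. l \<le> i \<Longrightarrow> \<phi> l p = \<psi> l q"
  shows "good s \<phi> i p = good s \<psi> i q"
proof -
  have "S2 \<phi> k p = S2 \<psi> k q" if "k \<le> Suc i" for k
    unfolding S2_def using assms that by (intro sum.cong refl) auto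
  thus ?thesis unfolding good_def by simp
qed

lemma uv_dm: "dyadic_meas (M i) (ux i)" "dyadic_meas (M i) (vx i)"
proof -
  have *: "good s F i x = good s F i y \<and> F i x = F i y"
    if h: "0 \<le> x" "x < 1" "0 \<le> y" "y < 1" "idx (M i) x = idx (M i) y" for x y
  proof -
    have "F l x = F l y" if "l \<le> i" for l using dmD[OF F_dm_mono[OF that] h] .
    thus ?thesis using good_cong[of i F x F y] by auto
  qed
  show "dyadic_meas (M i) (ux i)" unfolding dm_iff
  proof (intro allI impI)
    fix x y :: real assume h: "0 \<le> x" "x < 1" "0 \<le> y" "y < 1" "idx (M i) x = idx (M i) y"
    from *[OF h] have "good s F i x = good s F i y" "F i x = F i y" by auto
    thus "ux i x = ux i y" unfolding ux_def by simp
  qed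
  show "dyadic_meas (M i) (vx i)" unfolding dm_iff
  proof (intro allI impI)
    fix x y :: real assume h: "0 \<le> x" "x < 1" "0 \<le> y" "y < 1" "idx (M i) x = idx (M i) y"
    from *[OF h] have "good s F i x = good s F i y" "F i x = F i y" by auto
    thus "vx i x = vx i y" unfolding vx_def by simp
  qed
qed

lemma F_split: "F i = (\<lambda>x. ux i x + vx i x)"
  unfolding ux_def vx_def by auto

lemma TT_sub: "sublinear_on (dyadic_meas (M i)) (TT i)"
  unfolding TT_def M_def by (rule subl) simp

lemma TT_meas: "dyadic_meas (M i) g \<Longrightarrow> TT i g \<in> borel_measurable unitI"
  unfolding TT_def M_def by (rule Tmeas) auto

lemma split_AE: "AE x in unitI. \<bar>TT i (F i) x\<bar> \<le> \<bar>TT i (ux i) x\<bar> + \<bar>TT i (vx i) x\<bar>"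
proof -
  have A: "AE x in unitI. \<bar>TT i (\<lambda>y. ux i y + vx i y) x\<bar> \<le> \<bar>TT i (ux i) x\<bar> + \<bar>TT i (vx i) x\<bar>"
    by (rule sub_add[where P="dyadic_meas (M i)"]) (rule TT_sub uv_dm)+
  have e: "F i = (\<lambda>x. ux i x + vx i x)" by (rule F_split)
  show ?thesis using A by (simp only: e)
qed

lemma u_bound: "L1n (TT i (ux i)) \<le> ennreal C1 * L1n (ux i)"
  unfolding TT_def using TL1[of "Suc i" "ux i"] uv_dm(1)[of i] by (simp add: M_def)

lemma vx_small: "i < s \<Longrightarrow> vx i = (\<lambda>x. 0)"
proof
  fix x assume i: "i < s"
  show "vx i x = 0"
  proof (cases "good s F i x")
    case True
    hence "S2 F (Suc i) x \<le> 0" using i unfolding good_def by (simp add: S2_def)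
    hence "S2 F (Suc i) x = 0" using S2_nonneg[of F "Suc i" x] by simp
    moreover have "S2 F (Suc i) x = S2 F i x + (F i x)\<^sup>2" by (simp add: S2_def)
    moreover have "0 \<le> S2 F i x" by (rule S2_nonneg)
    moreover have "0 \<le> (F i x)\<^sup>2" by simp
    ultimately have "(F i x)\<^sup>2 = 0" by linarith
    thus ?thesis by (simp add: vx_def)
  qed (simp add: vx_def)
qed

lemma AE_TT_zero:
  assumes "dyadic_meas (M i) g" "L1n g = 0"
  shows "AE x in unitI. TT i g x = 0"
proof -
  have "L1n (TT i g) \<le> 0" using TL1[of "Suc i" g] assms unfolding TT_def M_def by simp
  hence "(\<integral>\<^sup>+x. ennreal \<bar>TT i g x\<bar> \<partial>unitI) = 0" unfolding L1n_def by simp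
  moreover have "(\<lambda>x. ennreal \<bar>TT i g x\<bar>) \<in> borel_measurable unitI" using TT_meas[OF assms(1)] by measurable
  ultimately have "AE x in unitI. ennreal \<bar>TT i g x\<bar> = 0" by (simp add: nn_integral_0_iff_AE)
  thus ?thesis by eventually_elim simp
qed

end




context setting begin

lemma q_L1: "L1n (\<lambda>x. g x * indicator (- {0..<1}) x) = 0"
proof -
  have sets: "{0..1::real} \<inter> space lborel \<in> sets lborel" by simp
  have "AE x in unitI. ennreal \<bar>g x * indicator (- {0..<1}) x\<bar> = 0"
    unfolding unitI_def AE_restrict_space_iff[OF sets]
    using AE_lborel_singleton[of "1::real"] by eventually_elim auto
  hence "L1n (\<lambda>x. g x * indicator (- {0..<1}) x) = (\<integral>\<^sup>+x. 0 \<partial>unitI)"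
    unfolding L1n_def by (rule nn_integral_cong_AE)
  thus ?thesis by simp
qed

lemma v_bound:
  fixes X :: "nat \<Rightarrow> real"
  assumes i: "s \<le> i"
    and X0: "\<And>J. 0 \<le> X J"
    and Xeq: "\<And>J. J < 2^(M (i-s)) \<Longrightarrow>
       (\<integral>\<^sup>+x. ennreal ((vx i x * indicator (dyadic_int (M (i-s)) J) x)\<^sup>2) \<partial>unitI) = ennreal (X J)"
  shows "(\<integral>\<^sup>+x. ennreal ((TT i (vx i) x)\<^sup>2) \<partial>unitI)
          \<le> ennreal ((C2 * (\<Sum>J<2^(M (i-s)). sqrt (1/2^(M (i-s))) * sqrt (X J)))\<^sup>2)"
proof -
  define n where "n = M (i - s)"
  have nM: "n \<le> M i" using M_mono by (simp add: n_def)
  define p where "p J = (\<lambda>x. vx i x * indicator (dyadic_int n J) x)" for J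
  define q where "q = (\<lambda>x. vx i x * indicator (- {0..<1}) x)"
  have pdm: "dyadic_meas (M i) (p J)" for J unfolding p_def by (rule dm_ind[OF nM uv_dm(2)])
  have qdm: "dyadic_meas (M i) q" unfolding q_def by (rule dm_out)
  have decomp: "vx i = (\<lambda>x. (\<Sum>J<2^n. p J x) + q x)"
  proof
    fix x show "vx i x = (\<Sum>J<2^n. p J x) + q x"
    proof (cases "0 \<le> x \<and> x < 1")
      case True
      have "(\<Sum>J<2^n. p J x) = (\<Sum>J<2^n. if idx n x = J then vx i x else 0)"
        unfolding p_def using True by (intro sum.cong refl) (simp add: ind_idx)
      also have "\<dots> = vx i x" using idx_lt[of x n] True by simp
      finally show ?thesis using True by (simp add: q_def)
    next
      case False
      have "p J x = 0" if "J < 2^n" for J using dyadic_int_sub[OF that] False unfolding p_def by (auto simp: indicator_def)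
      hence "(\<Sum>J<2^n. p J x) = 0" by simp
      thus ?thesis using False by (simp add: q_def)
    qed
  qed
  have sumdm: "dyadic_meas (M i) (\<lambda>x. \<Sum>J<2^n. p J x)" by (intro dm_sum pdm)
  have A1': "AE x in unitI. \<bar>TT i (\<lambda>x. (\<Sum>J<2^n. p J x) + q x) x\<bar> \<le> \<bar>TT i (\<lambda>x. \<Sum>J<2^n. p J x) x\<bar> + \<bar>TT i q x\<bar>"
    by (rule sub_add[where P="dyadic_meas (M i)"]) (rule TT_sub sumdm qdm)+
  have A1: "AE x in unitI. \<bar>TT i (vx i) x\<bar> \<le> \<bar>TT i (\<lambda>x. \<Sum>J<2^n. p J x) x\<bar> + \<bar>TT i q x\<bar>"
    using A1' by (simp only: decomp)
  have A2: "AE x in unitI. \<bar>TT i (\<lambda>x. \<Sum>J<2^n. p J x) x\<bar> \<le> (\<Sum>J<2^n. \<bar>TT i (p J) x\<bar>)"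
    by (rule sub_sum[where n="M i"]) (rule TT_sub, rule pdm, simp)
  have A3: "AE x in unitI. TT i q x = 0"
    by (rule AE_TT_zero[OF qdm]) (simp add: q_def q_L1)
  define \<beta> where "\<beta> J = C2 * sqrt (1/2^n) * sqrt (X J)" for J
  have \<beta>0: "0 \<le> \<beta> J" for J using C2 X0[of J] by (simp add: \<beta>_def)
  have pL2: "(\<integral>\<^sup>+x. ennreal ((TT i (p J) x)\<^sup>2) \<partial>unitI) \<le> ennreal ((\<beta> J)\<^sup>2)" if J: "J < 2^n" for J
  proof -
    have supp: "\<forall>x\<in>{0..1}. p J x \<noteq> 0 \<longrightarrow> x \<in> dyadic_int n J" unfolding p_def by (auto simp: indicator_def)
    have pdm': "dyadic_meas (mk (Suc i)) (p J)" using pdm[of J] by (simp add: M_def)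
    have "L2n (TT i (p J)) \<le> ennreal (C2 * sqrt (1/2^n)) * L2n (p J)"
      unfolding TT_def
    proof (rule TL2[where j = "Suc (i - s)" and i = J])
      show "1 \<le> Suc i" by simp
      show "dyadic_meas (mk (Suc i)) (p J)" by (rule pdm')
      show "J < 2^n" by (rule J)
      show "\<forall>x\<in>{0..1}. p J x \<noteq> 0 \<longrightarrow> x \<in> dyadic_int n J" by (rule supp)
      show "1 \<le> Suc (i - s)" by simp
      show "n \<le> mk (Suc (i - s))" by (simp add: n_def M_def)
      show "Suc (i - s) + s \<le> Suc i" using i by simp
    qed
    also have "L2n (p J) = ennreal (sqrt (X J))"
      unfolding L2n_def using Xeq[of J] J X0[of J] by (simp add: n_def p_def esqrt_ennreal)
    also have "ennreal (C2 * sqrt (1/2^n)) * ennreal (sqrt (X J)) = ennreal (\<beta> J)"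
      unfolding \<beta>_def using X0[of J] C2 by (subst ennreal_mult''[symmetric]) auto
    finally have "L2n (TT i (p J)) \<le> ennreal (\<beta> J)" .
    thus ?thesis unfolding L2n_def esqrt_le_iff using \<beta>0[of J] by (simp add: ennreal_power)
  qed
  define Pos where "Pos = {J. J < 2^n \<and> 0 < \<beta> J}"
  have finPos: "finite Pos" unfolding Pos_def by simp
  have PosSub: "Pos \<subseteq> {..<2^n}" unfolding Pos_def by auto
  have Tpm: "(\<lambda>x. ennreal ((TT i (p J) x)\<^sup>2)) \<in> borel_measurable unitI" for J
    using TT_meas[OF pdm[of J]] by measurable
  have A4: "AE x in unitI. \<forall>J\<in>{..<2^n} - Pos. TT i (p J) x = 0"
  proof (rule AE_finite_allI)
    show "finite ({..<2^n} - Pos)" by simp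
    fix J assume "J \<in> {..<2^n} - Pos"
    hence J: "J < 2^n" "\<beta> J = 0" using \<beta>0[of J] by (auto simp: Pos_def)
    have "(\<integral>\<^sup>+x. ennreal ((TT i (p J) x)\<^sup>2) \<partial>unitI) = 0" using pL2[OF J(1)] J(2) by simp
    hence "AE x in unitI. ennreal ((TT i (p J) x)\<^sup>2) = 0" using Tpm[of J] by (simp add: nn_integral_0_iff_AE)
    thus "AE x in unitI. TT i (p J) x = 0" by eventually_elim simp
  qed
  define B where "B = (\<Sum>J\<in>Pos. \<beta> J)"
  have B0: "0 \<le> B" unfolding B_def using \<beta>0 by (simp add: sum_nonneg)
  have B_eq: "B = C2 * (\<Sum>J<2^n. sqrt (1/2^n) * sqrt (X J))"
  proof -
    have "B = (\<Sum>J<2^n. \<beta> J)" unfolding B_def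
      by (rule sum.mono_neutral_left) (use \<beta>0 in \<open>auto simp: Pos_def less_le\<close>)
    thus ?thesis by (simp add: \<beta>_def sum_distrib_left mult_ac)
  qed
  have pw: "AE x in unitI. ennreal ((TT i (vx i) x)\<^sup>2) \<le> ennreal (B * (\<Sum>J\<in>Pos. (TT i (p J) x)\<^sup>2 / \<beta> J))"
    using A1 A2 A3 A4
  proof eventually_elim
    case (elim x)
    let ?g = "\<lambda>J. \<bar>TT i (p J) x\<bar>"
    let ?S = "(\<Sum>J\<in>Pos. (TT i (p J) x)\<^sup>2 / \<beta> J)"
    have "\<bar>TT i (vx i) x\<bar> \<le> (\<Sum>J<2^n. ?g J)" using elim(1,2,3) by simp
    also have "\<dots> = (\<Sum>J\<in>Pos. ?g J)"
      by (rule sum.mono_neutral_right) (use elim(4) PosSub in auto)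
    also have "\<dots> = (\<Sum>J\<in>Pos. \<bar>sqrt (\<beta> J)\<bar> * \<bar>?g J / sqrt (\<beta> J)\<bar>)"
      by (intro sum.cong refl) (auto simp: Pos_def)
    also have "\<dots> \<le> L2_set (\<lambda>J. sqrt (\<beta> J)) Pos * L2_set (\<lambda>J. ?g J / sqrt (\<beta> J)) Pos"
      by (rule L2_set_mult_ineq)
    also have "L2_set (\<lambda>J. sqrt (\<beta> J)) Pos = sqrt B"
      unfolding L2_set_def B_def using \<beta>0 by simp
    also have "L2_set (\<lambda>J. ?g J / sqrt (\<beta> J)) Pos = sqrt ?S"
      unfolding L2_set_def
      by (intro arg_cong[where f=sqrt] sum.cong refl) (auto simp: Pos_def power_divide)
    finally have le: "\<bar>TT i (vx i) x\<bar> \<le> sqrt B * sqrt ?S" .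
    have S0: "0 \<le> ?S" using \<beta>0 by (intro sum_nonneg) auto
    have "(TT i (vx i) x)\<^sup>2 = \<bar>TT i (vx i) x\<bar>\<^sup>2" by simp
    also have "\<dots> \<le> (sqrt B * sqrt ?S)\<^sup>2" using le by (intro power_mono) auto
    also have "\<dots> = B * ?S" using B0 S0 by (simp add: power_mult_distrib)
    finally show ?case by (rule ennreal_leI)
  qed
  have "(\<integral>\<^sup>+x. ennreal ((TT i (vx i) x)\<^sup>2) \<partial>unitI) \<le> (\<integral>\<^sup>+x. ennreal (B * (\<Sum>J\<in>Pos. (TT i (p J) x)\<^sup>2 / \<beta> J)) \<partial>unitI)"
    by (rule nn_integral_mono_AE[OF pw])
  also have "\<dots> = (\<integral>\<^sup>+x. ennreal B * (\<Sum>J\<in>Pos. ennreal (1 / \<beta> J) * ennreal ((TT i (p J) x)\<^sup>2)) \<partial>unitI)"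
  proof (rule nn_integral_cong)
    fix x
    have "ennreal (B * (\<Sum>J\<in>Pos. (TT i (p J) x)\<^sup>2 / \<beta> J)) = ennreal B * ennreal (\<Sum>J\<in>Pos. (TT i (p J) x)\<^sup>2 / \<beta> J)"
      using \<beta>0 by (intro ennreal_mult'' sum_nonneg) auto
    also have "ennreal (\<Sum>J\<in>Pos. (TT i (p J) x)\<^sup>2 / \<beta> J) = (\<Sum>J\<in>Pos. ennreal ((TT i (p J) x)\<^sup>2 / \<beta> J))"
      using \<beta>0 by (intro sum_ennreal[symmetric]) auto
    also have "\<dots> = (\<Sum>J\<in>Pos. ennreal (1 / \<beta> J) * ennreal ((TT i (p J) x)\<^sup>2))"
      using \<beta>0 by (intro sum.cong refl) (simp add: ennreal_mult''[symmetric])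
    finally show "ennreal (B * (\<Sum>J\<in>Pos. (TT i (p J) x)\<^sup>2 / \<beta> J)) = ennreal B * (\<Sum>J\<in>Pos. ennreal (1 / \<beta> J) * ennreal ((TT i (p J) x)\<^sup>2))" .
  qed
  also have "\<dots> = ennreal B * (\<integral>\<^sup>+x. (\<Sum>J\<in>Pos. ennreal (1 / \<beta> J) * ennreal ((TT i (p J) x)\<^sup>2)) \<partial>unitI)"
    by (rule nn_integral_cmult) (use Tpm in measurable)
  also have "(\<integral>\<^sup>+x. (\<Sum>J\<in>Pos. ennreal (1 / \<beta> J) * ennreal ((TT i (p J) x)\<^sup>2)) \<partial>unitI)
      = (\<Sum>J\<in>Pos. (\<integral>\<^sup>+x. ennreal (1 / \<beta> J) * ennreal ((TT i (p J) x)\<^sup>2) \<partial>unitI))"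
    by (rule nn_integral_sum) (use Tpm in measurable)
  also have "\<dots> = (\<Sum>J\<in>Pos. ennreal (1 / \<beta> J) * (\<integral>\<^sup>+x. ennreal ((TT i (p J) x)\<^sup>2) \<partial>unitI))"
    by (intro sum.cong refl nn_integral_cmult Tpm)
  also have "\<dots> \<le> (\<Sum>J\<in>Pos. ennreal (1 / \<beta> J) * ennreal ((\<beta> J)\<^sup>2))"
    by (intro sum_mono mult_left_mono pL2) (auto simp: Pos_def)
  also have "\<dots> = ennreal B"
  proof -
    have "(\<Sum>J\<in>Pos. ennreal (1 / \<beta> J) * ennreal ((\<beta> J)\<^sup>2)) = (\<Sum>J\<in>Pos. ennreal (\<beta> J))"
    proof (intro sum.cong refl)
      fix J assume "J \<in> Pos"
      hence b: "0 < \<beta> J" by (simp add: Pos_def)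
      have "ennreal (1 / \<beta> J) * ennreal ((\<beta> J)\<^sup>2) = ennreal (1 / \<beta> J * (\<beta> J)\<^sup>2)"
        using b by (simp add: ennreal_mult''[symmetric])
      also have "1 / \<beta> J * (\<beta> J)\<^sup>2 = \<beta> J" using b by (simp add: power2_eq_square)
      finally show "ennreal (1 / \<beta> J) * ennreal ((\<beta> J)\<^sup>2) = ennreal (\<beta> J)" .
    qed
    also have "\<dots> = ennreal B" unfolding B_def using \<beta>0 by simp
    finally show ?thesis .
  qed
  finally have "(\<integral>\<^sup>+x. ennreal ((TT i (vx i) x)\<^sup>2) \<partial>unitI) \<le> ennreal B * ennreal B"
    by (simp add: mult_left_mono)
  also have "\<dots> = ennreal (B\<^sup>2)" using B0 by (simp add: ennreal_mult''[symmetric] power2_eq_square)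
  finally show ?thesis unfolding B_eq n_def .
qed

end




definition pt :: "nat \<Rightarrow> nat \<Rightarrow> real" where "pt L j = real (j mod 2^L) / 2^L"

lemma pt_range: "0 \<le> pt L j" "pt L j < 1"
proof -
  show "0 \<le> pt L j" unfolding pt_def by simp
  have "j mod 2^L < 2^L" by simp
  hence "real (j mod 2^L) < 2^L" by (metis of_nat_less_numeral_power_cancel_iff)
  thus "pt L j < 1" unfolding pt_def by simp
qed

lemma idx_pt: "idx L (pt L j) = j mod 2^L"
  unfolding idx_def pt_def by simp

lemma idx_pt_idx: "0 \<le> x \<Longrightarrow> x < 1 \<Longrightarrow> idx L (pt L (idx L x)) = idx L x"
  using idx_lt[of x L] by (simp add: idx_pt)

context setting begin

definition \<phi> :: "nat \<Rightarrow> nat \<Rightarrow> nat \<Rightarrow> real" where "\<phi> N i j = F i (pt (M N) j)"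

lemma F_disc:
  assumes "l \<le> N" "0 \<le> x" "x < 1"
  shows "F l x = \<phi> N l (idx (M N) x)"
proof -
  have "dyadic_meas (M N) (F l)" by (rule F_dm_mono[OF assms(1)])
  moreover have "idx (M N) (pt (M N) (idx (M N) x)) = idx (M N) x" using idx_pt_idx assms by simp
  ultimately show ?thesis unfolding \<phi>_def
    using dmD[of "M N" "F l" x "pt (M N) (idx (M N) x)"] assms pt_range by simp
qed

lemma good_disc:
  assumes "i < N" "0 \<le> x" "x < 1"
  shows "good s F i x = good s (\<phi> N) i (idx (M N) x)"
  by (rule good_cong) (use F_disc[of _ N x] assms in auto)

lemma L1_disc:
  assumes "i < N"
  shows "L1n (ux i) = ennreal ((\<Sum>j<2^M N. \<bar>if good s (\<phi> N) i j then 0 else \<phi> N i j\<bar>) / 2^M N)"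
  unfolding L1n_def
proof (rule step_int)
  fix x :: real assume x: "0 \<le> x" "x < 1"
  show "\<bar>ux i x\<bar> = \<bar>if good s (\<phi> N) i (idx (M N) x) then 0 else \<phi> N i (idx (M N) x)\<bar>"
    unfolding ux_def using good_disc[OF assms x] F_disc[of i N x] assms x by simp
qed simp

lemma S_disc:
  "(\<integral>\<^sup>+x. ennreal (sqrt (S2 F N x)) \<partial>unitI) = ennreal ((\<Sum>j<2^M N. sqrt (S2 (\<phi> N) N j)) / 2^M N)"
proof (rule step_int)
  fix x :: real assume x: "0 \<le> x" "x < 1"
  have "S2 F N x = S2 (\<phi> N) N (idx (M N) x)"
    unfolding S2_def using F_disc[of _ N x] x by (intro sum.cong refl) auto
  thus "sqrt (S2 F N x) = sqrt (S2 (\<phi> N) N (idx (M N) x))" by simp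
qed (simp add: S2_nonneg)

lemma bc_disc:
  assumes "i < N"
  shows "bc (M N) (M i) (\<phi> N i)"
  unfolding bc_def
proof (intro allI impI)
  fix j j' :: nat
  let ?L = "M N"
  assume h: "j div 2^(?L - M i) = j' div 2^(?L - M i)"
  have iL: "M i \<le> ?L" using M_mono assms by simp
  have e: "(2::nat)^?L = 2^(?L - M i) * 2^(M i)" using iL by (simp add: power_add[symmetric])
  have k: "idx (M i) (pt ?L k) = (k div 2^(?L - M i)) mod 2^(M i)" for k
  proof -
    have "idx (M i) (pt ?L k) = idx ?L (pt ?L k) div 2^(?L - M i)"
      using idx_div[OF pt_range(1) iL] by simp
    also have "\<dots> = (k mod 2^?L) div 2^(?L - M i)" by (simp add: idx_pt)
    also have "\<dots> = (k div 2^(?L - M i)) mod 2^(M i)"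
      unfolding e by (simp add: mod_mult2_eq)
    finally show ?thesis .
  qed
  have "idx (M i) (pt ?L j) = idx (M i) (pt ?L j')" unfolding k h ..
  thus "\<phi> N i j = \<phi> N i j'" unfolding \<phi>_def
    using dmD[OF F_dm[of i]] pt_range by blast
qed

end




context setting begin

definition vd :: "nat \<Rightarrow> nat \<Rightarrow> nat \<Rightarrow> real" where
  "vd N i j = (if good s (\<phi> N) i j then \<phi> N i j else 0)"

lemma X_disc:
  assumes i: "s \<le> i" "i < N" and J: "J < 2^(M (i-s))"
  shows "(\<integral>\<^sup>+x. ennreal ((vx i x * indicator (dyadic_int (M (i-s)) J) x)\<^sup>2) \<partial>unitI)
       = ennreal ((\<Sum>r<2^(M N - M (i-s)). (vd N i (J * 2^(M N - M (i-s)) + r))\<^sup>2) / 2^(M N))"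
proof -
  define n where "n = M (i - s)"
  define L where "L = M N"
  define d :: nat where "d = 2^(L - n)"
  have nL: "n \<le> L" unfolding n_def L_def using M_mono i by simp
  define G where "G j = (if j div d = J then (vd N i j)\<^sup>2 else 0)" for j
  have "(\<integral>\<^sup>+x. ennreal ((vx i x * indicator (dyadic_int n J) x)\<^sup>2) \<partial>unitI) = ennreal ((\<Sum>j<2^L. G j) / 2^L)"
  proof (rule step_int)
    fix x :: real assume x: "0 \<le> x" "x < 1"
    have v: "vx i x = vd N i (idx L x)"
      unfolding vx_def vd_def L_def using good_disc[OF i(2) x] F_disc[of i N x] i x by simp
    have ind: "indicator (dyadic_int n J) x = (if idx L x div d = J then 1 else (0::real))"
      using ind_idx[OF x(1), of n J] idx_div[OF x(1) nL] unfolding d_def by simp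
    show "(vx i x * indicator (dyadic_int n J) x)\<^sup>2 = G (idx L x)"
      unfolding v ind G_def by simp
  qed (simp add: G_def)
  also have "(\<Sum>j<2^L. G j) = (\<Sum>r<d. (vd N i (J * d + r))\<^sup>2)"
  proof -
    have "(\<Sum>j<2^L. G j) = (\<Sum>J'<2^n. \<Sum>r<d. G (J' * d + r))"
      unfolding d_def by (rule sum_blocks[OF nL])
    also have "\<dots> = (\<Sum>J'<2^n. if J' = J then (\<Sum>r<d. (vd N i (J * d + r))\<^sup>2) else 0)"
    proof (rule sum.cong[OF refl])
      fix J' :: nat
      have "G (J' * d + r) = (if J' = J then (vd N i (J * d + r))\<^sup>2 else 0)" if "r < d" for r
        using that unfolding G_def by (auto simp: d_def)
      thus "(\<Sum>r<d. G (J' * d + r)) = (if J' = J then (\<Sum>r<d. (vd N i (J * d + r))\<^sup>2) else 0)"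
        by simp
    qed
    also have "\<dots> = (\<Sum>r<d. (vd N i (J * d + r))\<^sup>2)" using J by (simp add: n_def)
    finally show ?thesis .
  qed
  finally show ?thesis unfolding n_def L_def d_def .
qed

end




lemma sqrt_sum_split:
  fixes X U V :: "nat \<Rightarrow> real"
  assumes "\<And>k. k \<in> A \<Longrightarrow> 0 \<le> X k" "\<And>k. k \<in> A \<Longrightarrow> X k \<le> U k + V k"
    "\<And>k. k \<in> A \<Longrightarrow> 0 \<le> U k" "\<And>k. k \<in> A \<Longrightarrow> 0 \<le> V k"
  shows "sqrt (\<Sum>k\<in>A. (X k)\<^sup>2) \<le> (\<Sum>k\<in>A. U k) + sqrt (\<Sum>k\<in>A. (V k)\<^sup>2)"
proof -
  have "sqrt (\<Sum>k\<in>A. (X k)\<^sup>2) = L2_set X A" by (simp add: L2_set_def)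
  also have "\<dots> \<le> L2_set (\<lambda>k. U k + V k) A" by (rule L2_set_mono) (use assms in auto)
  also have "\<dots> \<le> L2_set U A + L2_set V A" by (rule L2_set_triangle_ineq)
  also have "L2_set U A \<le> (\<Sum>k\<in>A. U k)" by (rule L2_set_le_sum) (use assms in auto)
  finally show ?thesis by (simp add: L2_set_def)
qed

context setting begin

lemma sqfun_ge: "ennreal (sqrt (S2 F N x)) \<le> esqrt (\<Sum>k. ennreal ((f (Suc k) x)\<^sup>2))"
proof -
  have "ennreal (sqrt (S2 F N x)) = esqrt (ennreal (S2 F N x))" by (simp add: esqrt_ennreal S2_nonneg)
  also have "ennreal (S2 F N x) = (\<Sum>k<N. ennreal ((f (Suc k) x)\<^sup>2))" unfolding S2_def F_def by simp
  finally have e: "ennreal (sqrt (S2 F N x)) = esqrt (\<Sum>k<N. ennreal ((f (Suc k) x)\<^sup>2))" .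
  have le: "(\<Sum>k<N. ennreal ((f (Suc k) x)\<^sup>2)) \<le> (\<Sum>k. ennreal ((f (Suc k) x)\<^sup>2))"
    unfolding suminf_eq_SUP by (rule SUP_upper) simp
  show ?thesis unfolding e by (rule esqrt_mono[OF le])
qed

lemma R_le: "ennreal ((\<Sum>j<2^M N. sqrt (S2 (\<phi> N) N j)) / 2^M N) \<le> sqfun_norm f"
  unfolding S_disc[symmetric] sqfun_norm_def by (intro nn_integral_mono sqfun_ge)

lemma v_bound2:
  assumes "i < N"
  shows "(\<integral>\<^sup>+x. ennreal ((TT i (vx i) x)\<^sup>2) \<partial>unitI)
     \<le> ennreal ((C2 * (\<Sum>J<2^(M (i-s)). sqrt (1/2^(M (i-s))) *
          sqrt ((\<Sum>r<2^(M N - M (i-s)). (vd N i (J * 2^(M N - M (i-s)) + r))\<^sup>2) / 2^(M N))))\<^sup>2)"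
proof (cases "s \<le> i")
  case True
  show ?thesis
    by (rule v_bound[OF True]) (auto intro!: divide_nonneg_pos sum_nonneg X_disc[OF True assms])
next
  case False
  hence v0: "vx i = (\<lambda>x. 0)" by (intro vx_small) simp
  have "AE x in unitI. TT i (\<lambda>x. 0) x = 0" by (rule sub_zero[OF TT_sub dm_zero])
  hence "(\<integral>\<^sup>+x. ennreal ((TT i (vx i) x)\<^sup>2) \<partial>unitI) = (\<integral>\<^sup>+x. 0 \<partial>unitI)"
    unfolding v0 by (intro nn_integral_cong_AE) (auto elim: AE_mp)
  thus ?thesis by simp
qed

end




context setting begin

lemma finite_bound:
  "(\<integral>\<^sup>+\<omega>. ennreal (sqrt (\<Sum>k<N. (TT k (F k) (\<omega> (Suc k)))\<^sup>2)) \<partial>PiM UNIV (\<lambda>_. unitI))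
     \<le> ennreal (7 * (C1 * sqrt s + C2)) * sqfun_norm f"
proof -
  let ?P = "PiM UNIV (\<lambda>_. unitI)"
  define L where "L = M N"
  define R where "R = (\<Sum>j<2^L. sqrt (S2 (\<phi> N) N j)) / 2^L"
  define \<Phi> where "\<Phi> i = (\<Sum>J<2^M (i-s). sqrt (1 / 2^M (i-s)) *
            sqrt ((\<Sum>r<2^(L - M (i-s)). (vd N i (J * 2^(L - M (i-s)) + r))\<^sup>2) / 2^L))" for i
  have R0: "0 \<le> R" unfolding R_def by (intro divide_nonneg_pos sum_nonneg) (auto simp: S2_nonneg)
  have hML: "\<And>i. i < N \<Longrightarrow> M i \<le> L" unfolding L_def using M_mono by simp
  have hbc: "\<And>i. i < N \<Longrightarrow> bc L (M i) (\<phi> N i)" unfolding L_def by (rule bc_disc)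
  have D1: "(\<Sum>i<N. (\<Sum>j<2^L. \<bar>if good s (\<phi> N) i j then 0 else \<phi> N i j\<bar>) / 2^L) \<le> 2 * sqrt s * R"
    using discrete_main(1)[where \<phi>="\<phi> N" and M=M and s=s and N=N and L=L, OF hML M_mono hbc]
    unfolding R_def by simp
  have D2: "sqrt (\<Sum>i<N. (\<Phi> i)\<^sup>2) \<le> (2 * sqrt 5 + 2) * R"
    using discrete_main(2)[where \<phi>="\<phi> N" and M=M and s=s and N=N and L=L, OF hML M_mono hbc]
    unfolding R_def \<Phi>_def vd_def by simp
  have mF[measurable]: "TT k (F k) \<in> borel_measurable unitI" for k by (rule TT_meas[OF F_dm])
  have mu[measurable]: "TT k (ux k) \<in> borel_measurable unitI" for k by (rule TT_meas[OF uv_dm(1)])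
  have mv[measurable]: "TT k (vx k) \<in> borel_measurable unitI" for k by (rule TT_meas[OF uv_dm(2)])
  have probs: "\<And>i. i \<in> UNIV \<Longrightarrow> prob_space unitI" by (simp add: prob_unitI)
  have AEk: "AE \<omega> in ?P. \<forall>k\<in>{..<N}. \<bar>TT k (F k) (\<omega> (Suc k))\<bar> \<le> \<bar>TT k (ux k) (\<omega> (Suc k))\<bar> + \<bar>TT k (vx k) (\<omega> (Suc k))\<bar>"
  proof (rule AE_finite_allI)
    fix k
    show "AE \<omega> in ?P. \<bar>TT k (F k) (\<omega> (Suc k))\<bar> \<le> \<bar>TT k (ux k) (\<omega> (Suc k))\<bar> + \<bar>TT k (vx k) (\<omega> (Suc k))\<bar>"
      by (rule AE_PiM_component[where P="\<lambda>x. \<bar>TT k (F k) x\<bar> \<le> \<bar>TT k (ux k) x\<bar> + \<bar>TT k (vx k) x\<bar>", OF probs])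
         (simp_all add: split_AE)
  qed simp
  have pw: "AE \<omega> in ?P. ennreal (sqrt (\<Sum>k<N. (TT k (F k) (\<omega> (Suc k)))\<^sup>2))
      \<le> (\<Sum>k<N. ennreal \<bar>TT k (ux k) (\<omega> (Suc k))\<bar>) + ennreal (sqrt (\<Sum>k<N. (TT k (vx k) (\<omega> (Suc k)))\<^sup>2))"
    using AEk
  proof eventually_elim
    case (elim \<omega>)
    have "sqrt (\<Sum>k<N. (TT k (F k) (\<omega> (Suc k)))\<^sup>2) = sqrt (\<Sum>k<N. (\<bar>TT k (F k) (\<omega> (Suc k))\<bar>)\<^sup>2)" by simp
    also have "\<dots> \<le> (\<Sum>k<N. \<bar>TT k (ux k) (\<omega> (Suc k))\<bar>) + sqrt (\<Sum>k<N. (\<bar>TT k (vx k) (\<omega> (Suc k))\<bar>)\<^sup>2)"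
      by (rule sqrt_sum_split) (use elim in auto)
    finally have le: "sqrt (\<Sum>k<N. (TT k (F k) (\<omega> (Suc k)))\<^sup>2)
       \<le> (\<Sum>k<N. \<bar>TT k (ux k) (\<omega> (Suc k))\<bar>) + sqrt (\<Sum>k<N. (TT k (vx k) (\<omega> (Suc k)))\<^sup>2)" by simp
    have "ennreal (sqrt (\<Sum>k<N. (TT k (F k) (\<omega> (Suc k)))\<^sup>2))
       \<le> ennreal ((\<Sum>k<N. \<bar>TT k (ux k) (\<omega> (Suc k))\<bar>) + sqrt (\<Sum>k<N. (TT k (vx k) (\<omega> (Suc k)))\<^sup>2))"
      by (rule ennreal_leI[OF le])
    also have "\<dots> = (\<Sum>k<N. ennreal \<bar>TT k (ux k) (\<omega> (Suc k))\<bar>) + ennreal (sqrt (\<Sum>k<N. (TT k (vx k) (\<omega> (Suc k)))\<^sup>2))"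
      by (simp add: ennreal_plus sum_nonneg)
    finally show ?case .
  qed
  have "(\<integral>\<^sup>+\<omega>. ennreal (sqrt (\<Sum>k<N. (TT k (F k) (\<omega> (Suc k)))\<^sup>2)) \<partial>?P)
      \<le> (\<integral>\<^sup>+\<omega>. (\<Sum>k<N. ennreal \<bar>TT k (ux k) (\<omega> (Suc k))\<bar>) + ennreal (sqrt (\<Sum>k<N. (TT k (vx k) (\<omega> (Suc k)))\<^sup>2)) \<partial>?P)"
    by (rule nn_integral_mono_AE[OF pw])
  also have "\<dots> = (\<integral>\<^sup>+\<omega>. (\<Sum>k<N. ennreal \<bar>TT k (ux k) (\<omega> (Suc k))\<bar>) \<partial>?P)
      + (\<integral>\<^sup>+\<omega>. ennreal (sqrt (\<Sum>k<N. (TT k (vx k) (\<omega> (Suc k)))\<^sup>2)) \<partial>?P)"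
    by (rule nn_integral_add) measurable
  also have "(\<integral>\<^sup>+\<omega>. (\<Sum>k<N. ennreal \<bar>TT k (ux k) (\<omega> (Suc k))\<bar>) \<partial>?P) = (\<Sum>k<N. L1n (TT k (ux k)))"
  proof -
    have "(\<integral>\<^sup>+\<omega>. (\<Sum>k<N. ennreal \<bar>TT k (ux k) (\<omega> (Suc k))\<bar>) \<partial>?P)
        = (\<Sum>k<N. (\<integral>\<^sup>+\<omega>. ennreal \<bar>TT k (ux k) (\<omega> (Suc k))\<bar> \<partial>?P))"
      by (rule nn_integral_sum) measurable
    also have "\<dots> = (\<Sum>k<N. L1n (TT k (ux k)))"
      unfolding L1n_def by (intro sum.cong refl marg) measurable
    finally show ?thesis .
  qed
  also have "(\<integral>\<^sup>+\<omega>. ennreal (sqrt (\<Sum>k<N. (TT k (vx k) (\<omega> (Suc k)))\<^sup>2)) \<partial>?P)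
      \<le> esqrt (\<integral>\<^sup>+\<omega>. ennreal (\<Sum>k<N. (TT k (vx k) (\<omega> (Suc k)))\<^sup>2) \<partial>?P)"
    by (rule jensen_sqrt) (auto intro!: prob_space_PiM prob_unitI sum_nonneg)
  also have "(\<integral>\<^sup>+\<omega>. ennreal (\<Sum>k<N. (TT k (vx k) (\<omega> (Suc k)))\<^sup>2) \<partial>?P)
      = (\<Sum>k<N. (\<integral>\<^sup>+x. ennreal ((TT k (vx k) x)\<^sup>2) \<partial>unitI))"
  proof -
    have "(\<integral>\<^sup>+\<omega>. ennreal (\<Sum>k<N. (TT k (vx k) (\<omega> (Suc k)))\<^sup>2) \<partial>?P)
        = (\<integral>\<^sup>+\<omega>. (\<Sum>k<N. ennreal ((TT k (vx k) (\<omega> (Suc k)))\<^sup>2)) \<partial>?P)"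
      by (intro nn_integral_cong) simp
    also have "\<dots> = (\<Sum>k<N. (\<integral>\<^sup>+\<omega>. ennreal ((TT k (vx k) (\<omega> (Suc k)))\<^sup>2) \<partial>?P))"
      by (rule nn_integral_sum) measurable
    also have "\<dots> = (\<Sum>k<N. (\<integral>\<^sup>+x. ennreal ((TT k (vx k) x)\<^sup>2) \<partial>unitI))"
      by (intro sum.cong refl marg) measurable
    finally show ?thesis .
  qed
  also have "(\<Sum>k<N. (\<integral>\<^sup>+x. ennreal ((TT k (vx k) x)\<^sup>2) \<partial>unitI)) \<le> (\<Sum>k<N. ennreal ((C2 * \<Phi> k)\<^sup>2))"
    unfolding \<Phi>_def L_def by (intro sum_mono v_bound2) simp
  also have "(\<Sum>k<N. ennreal ((C2 * \<Phi> k)\<^sup>2)) = ennreal ((C2 * sqrt (\<Sum>k<N. (\<Phi> k)\<^sup>2))\<^sup>2)"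
    using C2 by (simp add: power_mult_distrib sum_distrib_left sum_nonneg)
  also have "(\<Sum>k<N. L1n (TT k (ux k))) \<le> (\<Sum>k<N. ennreal C1 * ennreal ((\<Sum>j<2^L. \<bar>if good s (\<phi> N) k j then 0 else \<phi> N k j\<bar>) / 2^L))"
  proof (intro sum_mono)
    fix k assume "k \<in> {..<N}"
    hence k: "k < N" by simp
    show "L1n (TT k (ux k)) \<le> ennreal C1 * ennreal ((\<Sum>j<2^L. \<bar>if good s (\<phi> N) k j then 0 else \<phi> N k j\<bar>) / 2^L)"
      using u_bound[of k] L1_disc[OF k] unfolding L_def by simp
  qed
  also have "\<dots> = ennreal (C1 * (\<Sum>k<N. (\<Sum>j<2^L. \<bar>if good s (\<phi> N) k j then 0 else \<phi> N k j\<bar>) / 2^L))"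
    using C1 by (simp add: ennreal_mult''[symmetric] sum_distrib_left sum_nonneg ennreal_mult[symmetric])
  finally have main: "(\<integral>\<^sup>+\<omega>. ennreal (sqrt (\<Sum>k<N. (TT k (F k) (\<omega> (Suc k)))\<^sup>2)) \<partial>?P)
     \<le> ennreal (C1 * (\<Sum>k<N. (\<Sum>j<2^L. \<bar>if good s (\<phi> N) k j then 0 else \<phi> N k j\<bar>) / 2^L))
       + esqrt (ennreal ((C2 * sqrt (\<Sum>k<N. (\<Phi> k)\<^sup>2))\<^sup>2))"
    by (simp add: add_mono esqrt_mono)
  also have "esqrt (ennreal ((C2 * sqrt (\<Sum>k<N. (\<Phi> k)\<^sup>2))\<^sup>2)) = ennreal (C2 * sqrt (\<Sum>k<N. (\<Phi> k)\<^sup>2))"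
    using C2 by (simp add: esqrt_ennreal sum_nonneg)
  also have "ennreal (C1 * (\<Sum>k<N. (\<Sum>j<2^L. \<bar>if good s (\<phi> N) k j then 0 else \<phi> N k j\<bar>) / 2^L))
        + ennreal (C2 * sqrt (\<Sum>k<N. (\<Phi> k)\<^sup>2))
      \<le> ennreal (C1 * (2 * sqrt s * R)) + ennreal (C2 * ((2 * sqrt 5 + 2) * R))"
    using D1 D2 C1 C2 by (intro add_mono ennreal_leI mult_left_mono) auto
  also have "\<dots> \<le> ennreal (7 * (C1 * sqrt s + C2) * R)"
  proof -
    have s5: "sqrt 5 \<le> 5/2" by (rule real_le_lsqrt) (auto simp: power2_eq_square)
    have "C1 * (2 * sqrt s * R) \<le> 7 * C1 * sqrt s * R"
      using C1 R0 by (simp add: mult_right_mono mult_left_mono mult_ac)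
    moreover have "C2 * ((2 * sqrt 5 + 2) * R) \<le> 7 * C2 * R"
    proof -
      have "(2 * sqrt 5 + 2) * R \<le> 7 * R" using s5 R0 by (intro mult_right_mono) auto
      thus ?thesis using C2 by (simp add: mult_left_mono mult_ac)
    qed
    moreover have "7 * (C1 * sqrt s + C2) * R = 7 * C1 * sqrt s * R + 7 * C2 * R"
      by (simp add: algebra_simps)
    ultimately have le: "C1 * (2 * sqrt s * R) + C2 * ((2 * sqrt 5 + 2) * R) \<le> 7 * (C1 * sqrt s + C2) * R"
      by linarith
    have a0: "0 \<le> C1 * (2 * sqrt s * R)" using C1 R0 by simp
    have b0: "0 \<le> C2 * ((2 * sqrt 5 + 2) * R)" using C2 R0 by simp
    have "ennreal (C1 * (2 * sqrt s * R)) + ennreal (C2 * ((2 * sqrt 5 + 2) * R))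
        = ennreal (C1 * (2 * sqrt s * R) + C2 * ((2 * sqrt 5 + 2) * R))"
      by (rule ennreal_plus[OF a0 b0, symmetric])
    also have "\<dots> \<le> ennreal (7 * (C1 * sqrt s + C2) * R)" by (rule ennreal_leI[OF le])
    finally show ?thesis .
  qed
  also have "\<dots> = ennreal (7 * (C1 * sqrt s + C2)) * ennreal R"
    using R0 by (simp add: ennreal_mult'')
  also have "\<dots> \<le> ennreal (7 * (C1 * sqrt s + C2)) * sqfun_norm f"
    using R_le unfolding R_def L_def by (intro mult_left_mono) auto
  finally show ?thesis .
qed

end




context setting begin

lemma ind_bound:
  "ind_norm (\<lambda>k. T k (f k)) \<le> ennreal (7 * (C1 * sqrt s + C2)) * sqfun_norm f"
proof -
  let ?P = "PiM UNIV (\<lambda>_. unitI)"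
  define G where "G N \<omega> = ennreal (sqrt (\<Sum>k<N. (TT k (F k) (\<omega> (Suc k)))\<^sup>2))" for N \<omega>
  have mF[measurable]: "TT k (F k) \<in> borel_measurable unitI" for k by (rule TT_meas[OF F_dm])
  have integrand: "esqrt (\<Sum>k. ennreal ((T (Suc k) (f (Suc k)) (\<omega> (Suc k)))\<^sup>2)) = (SUP N. G N \<omega>)" for \<omega>
  proof -
    have "(\<Sum>k. ennreal ((T (Suc k) (f (Suc k)) (\<omega> (Suc k)))\<^sup>2))
        = (SUP N. \<Sum>k<N. ennreal ((TT k (F k) (\<omega> (Suc k)))\<^sup>2))"
      unfolding suminf_eq_SUP TT_def F_def ..
    hence "esqrt (\<Sum>k. ennreal ((T (Suc k) (f (Suc k)) (\<omega> (Suc k)))\<^sup>2))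
        = (SUP N. esqrt (\<Sum>k<N. ennreal ((TT k (F k) (\<omega> (Suc k)))\<^sup>2)))"
      by (simp add: esqrt_SUP)
    also have "\<dots> = (SUP N. G N \<omega>)"
      unfolding G_def by (intro SUP_cong refl) (simp add: esqrt_ennreal sum_nonneg)
    finally show ?thesis .
  qed
  have "ind_norm (\<lambda>k. T k (f k)) = (\<integral>\<^sup>+\<omega>. (SUP N. G N \<omega>) \<partial>?P)"
    unfolding ind_norm_def integrand ..
  also have "\<dots> = (SUP N. (\<integral>\<^sup>+\<omega>. G N \<omega> \<partial>?P))"
  proof (rule nn_integral_monotone_convergence_SUP)
    show "incseq G"
    proof (rule incseq_SucI, rule le_funI)
      fix N \<omega>
      show "G N \<omega> \<le> G (Suc N) \<omega>" unfolding G_def by (intro ennreal_leI real_sqrt_le_mono) simp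
    qed
    show "\<And>N. G N \<in> borel_measurable ?P" unfolding G_def by measurable
  qed
  also have "\<dots> \<le> ennreal (7 * (C1 * sqrt s + C2)) * sqfun_norm f"
    unfolding G_def by (intro SUP_least finite_bound)
  finally show ?thesis .
qed

end

theorem theorem2p5:
  shows "\<exists>c::real. c > 0 \<and>
    (\<forall>(mk::nat \<Rightarrow> nat) (s::nat) (T::nat \<Rightarrow> (real \<Rightarrow> real) \<Rightarrow> (real \<Rightarrow> real)) (C1::real) (C2::real).
      (\<forall>k\<ge>1. mk k < mk (Suc k)) \<and> C1 \<ge> 0 \<and> C2 \<ge> 0 \<and>
      (\<forall>k\<ge>1. sublinear_on (dyadic_meas (mk k)) (T k)) \<and>
      (\<forall>k\<ge>1. \<forall>f. dyadic_meas (mk k) f \<longrightarrow> T k f \<in> borel_measurable unitI) \<and>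
      (\<forall>k\<ge>1. \<forall>f. dyadic_meas (mk k) f \<longrightarrow> L1n (T k f) \<le> ennreal C1 * L1n f) \<and>
      (\<forall>k\<ge>1. \<forall>f (m::nat) (i::nat) (j::nat).
          dyadic_meas (mk k) f \<and> i < 2 ^ m \<and>
          (\<forall>x\<in>{0..1}. f x \<noteq> 0 \<longrightarrow> x \<in> dyadic_int m i) \<and>
          1 \<le> j \<and> m \<le> mk j \<and> j + s \<le> k
          \<longrightarrow> L2n (T k f) \<le> ennreal (C2 * sqrt (1 / 2 ^ m)) * L2n f)
      \<longrightarrow> (\<forall>f::nat \<Rightarrow> real \<Rightarrow> real. (\<forall>k\<ge>1. dyadic_meas (mk k) (f k)) \<longrightarrow>
             ind_norm (\<lambda>k. T k (f k)) \<le> ennreal (c * (C1 * sqrt (real s) + C2)) * sqfun_norm f))"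
proof (intro exI[of _ 7] conjI allI impI)
  show "(7::real) > 0" by simp
next
  fix mk s T C1 C2 f
  assume H: "(\<forall>k\<ge>1. mk k < mk (Suc k)) \<and> C1 \<ge> 0 \<and> C2 \<ge> 0 \<and>
      (\<forall>k\<ge>1. sublinear_on (dyadic_meas (mk k)) (T k)) \<and>
      (\<forall>k\<ge>1. \<forall>f. dyadic_meas (mk k) f \<longrightarrow> T k f \<in> borel_measurable unitI) \<and>
      (\<forall>k\<ge>1. \<forall>f. dyadic_meas (mk k) f \<longrightarrow> L1n (T k f) \<le> ennreal C1 * L1n f) \<and>
      (\<forall>k\<ge>1. \<forall>f (m::nat) (i::nat) (j::nat).
          dyadic_meas (mk k) f \<and> i < 2 ^ m \<and>
          (\<forall>x\<in>{0..1}. f x \<noteq> 0 \<longrightarrow> x \<in> dyadic_int m i) \<and>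
          1 \<le> j \<and> m \<le> mk j \<and> j + s \<le> k
          \<longrightarrow> L2n (T k f) \<le> ennreal (C2 * sqrt (1 / 2 ^ m)) * L2n f)"
    and Hf: "\<forall>k\<ge>1. dyadic_meas (mk k) (f k)"
  interpret setting mk s T C1 C2 f
  proof
    show "\<And>k. 1 \<le> k \<Longrightarrow> mk k < mk (Suc k)" using H by blast
    show "0 \<le> C1" using H by blast
    show "0 \<le> C2" using H by blast
    show "\<And>k. 1 \<le> k \<Longrightarrow> sublinear_on (dyadic_meas (mk k)) (T k)" using H by blast
    show "\<And>k g. 1 \<le> k \<Longrightarrow> dyadic_meas (mk k) g \<Longrightarrow> T k g \<in> borel_measurable unitI" using H by blast
    show "\<And>k g. 1 \<le> k \<Longrightarrow> dyadic_meas (mk k) g \<Longrightarrow> L1n (T k g) \<le> ennreal C1 * L1n g" using H by blast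
    show "\<And>k g m i j. 1 \<le> k \<Longrightarrow> dyadic_meas (mk k) g \<Longrightarrow> i < 2 ^ m \<Longrightarrow>
          \<forall>x\<in>{0..1}. g x \<noteq> 0 \<longrightarrow> x \<in> dyadic_int m i \<Longrightarrow> 1 \<le> j \<Longrightarrow> m \<le> mk j \<Longrightarrow> j + s \<le> k \<Longrightarrow>
          L2n (T k g) \<le> ennreal (C2 * sqrt (1 / 2 ^ m)) * L2n g"
    proof -
      fix k g m i j
      assume "1 \<le> k" "dyadic_meas (mk k) g" "i < 2 ^ m" "\<forall>x\<in>{0..1}. g x \<noteq> 0 \<longrightarrow> x \<in> dyadic_int m i"
        "1 \<le> j" "m \<le> mk j" "j + s \<le> k"
      moreover have "\<forall>k\<ge>1. \<forall>f (m::nat) (i::nat) (j::nat).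
          dyadic_meas (mk k) f \<and> i < 2 ^ m \<and>
          (\<forall>x\<in>{0..1}. f x \<noteq> 0 \<longrightarrow> x \<in> dyadic_int m i) \<and>
          1 \<le> j \<and> m \<le> mk j \<and> j + s \<le> k
          \<longrightarrow> L2n (T k f) \<le> ennreal (C2 * sqrt (1 / 2 ^ m)) * L2n f" using H by blast
      ultimately show "L2n (T k g) \<le> ennreal (C2 * sqrt (1 / 2 ^ m)) * L2n g" by blast
    qed
    show "\<And>k. 1 \<le> k \<Longrightarrow> dyadic_meas (mk k) (f k)" using Hf by blast
  qed
  show "ind_norm (\<lambda>k. T k (f k)) \<le> ennreal (7 * (C1 * sqrt (real s) + C2)) * sqfun_norm f"
    by (rule ind_bound)
qed



end
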